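(* Let $N\ge 2$ and $\Omega=\mathbb{R}\times\omega\subset\mathbb{R}^N$, where $\omega\subset\mathbb{R}^{N-1}$ is a bounded connected open set of class $C^1$, with outward unit normal $n$ on $\partial\Omega$. Let $\psi\in C^2(\Omega,\mathbb{R})\cap C^1(\overline{\Omega},\mathbb{R})$ and $v=\nabla\psi$, with $v\in C^1(\Omega,\mathbb{R}^N)\cap C(\overline{\Omega},\mathbb{R}^N)$, $v\cdot n=0$ on $\partial\Omega$, and $\eta:=\inf_{\overline{\Omega}}|v|>0$ (no divergence-free condition is assumed). For $x\in\overline{\Omega}$, let $\xi_x$ be the maximal solution of $\xi_x'(\tau)=v(\xi_x(\tau))$, $\xi_x(0)=x$, defined on its maximal open interval $I_x=(\tau_x^-,\tau_x^+)$ with $-\infty\le\tau_x^-<0<\tau_x^+\le+\infty$ (and taking values in $\overline{\Omega}$). Then for each $x\in\overline{\Omega}$, $|\xi_x(\tau)|\to+\infty$ as $\tau\to\tau_x^-$ and as $\tau\to\tau_x^+$, and $\psi(\xi_x(\tau))\to\pm\infty$ as $\tau\to\tau_x^\pm$.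
   Context: The flow $\xi_x$ is well defined and unique on a maximal interval (by the Cauchy–Lipschitz theorem and the tangential condition $v\cdot n=0$); it stays in $\Omega$ if $x\in\Omega$ and in $\partial\Omega$ if $x\in\partial\Omega$. *)

theory Defs
  imports "HOL-Analysis.Analysis"
begin

definition C1_boundary_normal :: "'a::euclidean_space set \<Rightarrow> ('a \<Rightarrow> 'a) \<Rightarrow> bool" where
  "C1_boundary_normal w nrm \<longleftrightarrow>
     (\<forall>z\<in>frontier w. \<exists>r>0. \<exists>g G.
        (\<forall>y\<in>ball z r. (g has_derivative (\<lambda>h. G y \<bullet> h)) (at y) \<and> G y \<noteq> 0) \<and>
        continuous_on (ball z r) G \<and>
        w \<inter> ball z r = {y\<in>ball z r. g y < 0} \<and>
        nrm z = G z /\<^sub>R norm (G z))"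

definition flow_sol :: "('b::real_normed_vector \<Rightarrow> 'b) \<Rightarrow> 'b set \<Rightarrow> 'b \<Rightarrow> real set \<Rightarrow> (real \<Rightarrow> 'b) \<Rightarrow> bool" where
  "flow_sol v S x I xi \<longleftrightarrow> is_interval I \<and> open I \<and> 0 \<in> I \<and> xi 0 = x \<and>
     (\<forall>t\<in>I. xi t \<in> S \<and> (xi has_vector_derivative v (xi t)) (at t))"

definition max_flow_sol :: "('b::real_normed_vector \<Rightarrow> 'b) \<Rightarrow> 'b set \<Rightarrow> 'b \<Rightarrow> real set \<Rightarrow> (real \<Rightarrow> 'b) \<Rightarrow> bool" where
  "max_flow_sol v S x I xi \<longleftrightarrow> flow_sol v S x I xi \<and>
     (\<forall>J zeta. flow_sol v S x J zeta \<and> I \<subseteq> J \<and> (\<forall>t\<in>I. zeta t = xi t) \<longrightarrow> J = I)"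

definition upper_end :: "real set \<Rightarrow> real filter" where
  "upper_end I = (if bdd_above I then at_left (Sup I) else at_top)"

definition lower_end :: "real set \<Rightarrow> real filter" where
  "lower_end I = (if bdd_below I then at_right (Inf I) else at_bot)"

end

theory Submission
  imports Defs "HOL-Library.Diagonal_Subsequence"
begin

context
  fixes f :: "'b::euclidean_space \<Rightarrow> 'b" and x :: "nat \<Rightarrow> 'b"
    and S K :: "'b set" and p :: 'b and r M h \<epsilon> :: real
  assumes K: "K = S \<inter> cball p r" and r0: "r > 0" and M1: "M \<ge> 1"
    and Mb: "\<And>q. q \<in> K \<Longrightarrow> norm (f q) \<le> M"
    and h0: "h > 0" and eps0: "0 \<le> \<epsilon>" and eps1: "\<epsilon> \<le> 1"
    and x0: "x 0 = p" and pS: "p \<in> S"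
    and step: "\<And>k. x k \<in> K \<Longrightarrow> x (Suc k) \<in> S \<and> norm (x (Suc k) - (x k + h *\<^sub>R f (x k))) \<le> \<epsilon> * h"
begin

lemma euler_step_bound:
  assumes "x k \<in> K" shows "norm (x (Suc k) - x k) \<le> 2 * M * h"
proof -
  have eq: "x (Suc k) - x k = (x (Suc k) - (x k + h *\<^sub>R f (x k))) + h *\<^sub>R f (x k)" by simp
  have "norm (x (Suc k) - x k) \<le> norm (x (Suc k) - (x k + h *\<^sub>R f (x k))) + norm (h *\<^sub>R f (x k))"
    unfolding eq by (rule norm_triangle_ineq)
  also have "\<dots> \<le> \<epsilon> * h + h * M"
    using step[OF assms] Mb[OF assms] h0 by (intro add_mono) (auto intro: mult_left_mono)
  also have "\<dots> \<le> 2 * M * h"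
    using mult_right_mono[OF eps1, of h] mult_right_mono[OF M1, of h] h0 by (simp add: algebra_simps)
  finally show ?thesis .
qed

lemma euler_in_K:
  "real k * h \<le> r / (2 * M) \<Longrightarrow> x k \<in> K \<and> dist (x k) p \<le> 2 * M * real k * h"
proof (induction k)
  case 0
  then show ?case using x0 pS K r0 by auto
next
  case (Suc k)
  have "real k * h \<le> real (Suc k) * h" using h0 by (simp add: mult_right_mono)
  with Suc.prems have IH: "x k \<in> K" "dist (x k) p \<le> 2 * M * real k * h" using Suc.IH by auto
  have "dist (x (Suc k)) p \<le> dist (x (Suc k)) (x k) + dist (x k) p" by (rule dist_triangle)
  also have "\<dots> \<le> 2 * M * h + 2 * M * real k * h"
    using euler_step_bound[OF IH(1)] IH(2) by (simp add: dist_norm)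
  also have "\<dots> = 2 * M * real (Suc k) * h" by (simp add: algebra_simps)
  finally have d: "dist (x (Suc k)) p \<le> 2 * M * real (Suc k) * h" .
  have "2 * M * real (Suc k) * h \<le> r"
    using Suc.prems M1 by (simp add: field_simps mult.commute mult.left_commute)
  with d have "x (Suc k) \<in> cball p r" by (simp add: dist_commute)
  with step[OF IH(1)] K d show ?case by auto
qed

lemma euler_incr:
  "real (i + d) * h \<le> r / (2 * M) \<Longrightarrow> norm (x (i + d) - x i) \<le> 2 * M * real d * h"
proof (induction d)
  case 0 then show ?case by simp
next
  case (Suc d)
  have "real (i + d) * h \<le> real (i + Suc d) * h" using h0 by (simp add: mult_right_mono)
  with Suc.prems have le: "real (i + d) * h \<le> r / (2 * M)" by linarith
  then have xK: "x (i + d) \<in> K" using euler_in_K by blast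
  have eq: "x (i + Suc d) - x i = (x (Suc (i + d)) - x (i + d)) + (x (i + d) - x i)" by simp
  have "norm (x (i + Suc d) - x i) \<le> norm (x (Suc (i + d)) - x (i + d)) + norm (x (i + d) - x i)"
    unfolding eq by (rule norm_triangle_ineq)
  also have "\<dots> \<le> 2 * M * h + 2 * M * real d * h"
    using euler_step_bound[OF xK] Suc.IH[OF le] by linarith
  also have "\<dots> = 2 * M * real (Suc d) * h" by (simp add: algebra_simps)
  finally show ?case .
qed

lemma euler_lin:
  assumes uc: "\<And>q q'. q \<in> K \<Longrightarrow> q' \<in> K \<Longrightarrow> dist q q' < \<delta> \<Longrightarrow> norm (f q - f q') \<le> e"
    and e0: "e \<ge> 0"
  shows "real (i + d) * h \<le> r / (2 * M) \<Longrightarrow> 2 * M * real d * h < \<delta> \<Longrightarrow>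
    norm (x (i + d) - x i - (real d * h) *\<^sub>R f (x i)) \<le> real d * h * (\<epsilon> + e)"
proof (induction d)
  case 0 then show ?case by simp
next
  case (Suc d)
  have "real (i + d) * h \<le> real (i + Suc d) * h" using h0 by (simp add: mult_right_mono)
  with Suc.prems have le: "real (i + d) * h \<le> r / (2 * M)" by linarith
  have "2 * M * real d * h \<le> 2 * M * real (Suc d) * h" using h0 M1 by (simp add: mult_right_mono)
  with Suc.prems have lt: "2 * M * real d * h < \<delta>" by linarith
  have xK: "x (i + d) \<in> K" using euler_in_K le by blast
  have "real i * h \<le> real (i + d) * h" using h0 by (simp add: mult_right_mono)
  with le have xiK: "x i \<in> K" using euler_in_K by (meson order_trans)
  have dd: "dist (x (i + d)) (x i) < \<delta>"
    using euler_incr[OF le] lt by (simp add: dist_norm)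
  have fd: "norm (f (x (i + d)) - f (x i)) \<le> e" using uc[OF xK xiK dd] .
  have eq: "x (i + Suc d) - x i - (real (Suc d) * h) *\<^sub>R f (x i)
     = (x (Suc (i + d)) - (x (i + d) + h *\<^sub>R f (x (i + d))))
       + (x (i + d) - x i - (real d * h) *\<^sub>R f (x i))
       + h *\<^sub>R (f (x (i + d)) - f (x i))"
    by (simp add: algebra_simps)
  have "norm (x (i + Suc d) - x i - (real (Suc d) * h) *\<^sub>R f (x i))
     \<le> \<epsilon> * h + real d * h * (\<epsilon> + e) + h * e"
    unfolding eq
    apply (rule order_trans[OF norm_triangle_ineq])
    apply (rule add_mono)
     apply (rule order_trans[OF norm_triangle_ineq])
     apply (rule add_mono)
    using step[OF xK] Suc.IH[OF le lt] fd h0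
    by (auto intro: mult_left_mono)
  also have "\<dots> = real (Suc d) * h * (\<epsilon> + e)" by (simp add: algebra_simps)
  finally show ?case .
qed

end

lemma diag_conv:
  fixes F :: "nat \<Rightarrow> nat \<Rightarrow> 'b::euclidean_space"
  assumes K: "compact K" and FK: "\<And>n k. F n k \<in> K"
  shows "\<exists>s. strict_mono s \<and> (\<forall>k. convergent (\<lambda>n. F (s n) k))"
proof -
  let ?P = "\<lambda>k. \<lambda>s. convergent (\<lambda>n. F (s n) k)"
  interpret nat: subseqs ?P
  proof (unfold convergent_def, unfold subseqs_def, auto)
    fix k :: nat and s :: "nat \<Rightarrow> nat" assume s: "strict_mono s"
    have "\<And>n. F (s n) k \<in> K" using FK by auto
    then obtain l s' where "strict_mono s'" "((\<lambda>n. F (s n) k) \<circ> s') \<longlonglongrightarrow> l"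
      using K compact_imp_seq_compact seq_compactE by metis
    thus "\<exists>s'. strict_mono (s'::nat\<Rightarrow>nat) \<and> (\<exists>l. (\<lambda>n. F (s (s' n)) k) \<longlonglongrightarrow> l)"
      by (auto simp: comp_def)
  qed
  define d where "d = nat.diagseq"
  have subseq: "strict_mono d"
    unfolding d_def using nat.subseq_diagseq by auto
  have cnv: "?P k d" for k
  proof -
    have Pn_seqseq: "?P k (nat.seqseq (Suc k))"
      by (rule nat.seqseq_holds)
    have 1: "(\<lambda>n. F ((nat.seqseq (Suc k) \<circ> (\<lambda>n. nat.fold_reduce (Suc k) n
      (Suc k + n))) n) k) = (\<lambda>n. F (nat.seqseq (Suc k) n) k) \<circ>
      (\<lambda>n. nat.fold_reduce (Suc k) n (Suc k + n))"
      by auto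
    have 2: "?P k (d \<circ> ((+) (Suc k)))"
      unfolding d_def nat.diagseq_seqseq 1
      by (intro convergent_subseq_convergent Pn_seqseq nat.subseq_diagonal_rest)
    then obtain L where 3: "(\<lambda>na. F (d (na + Suc k)) k) \<longlonglongrightarrow> L"
      by (auto simp: add.commute dest: convergentD)
    then have "(\<lambda>n. F (d n) k) \<longlonglongrightarrow> L"
      by (rule LIMSEQ_offset)
    then show ?thesis
      by (auto simp: convergent_def)
  qed
  show ?thesis using subseq cnv by blast
qed

lemma floor_bounds:
  assumes "h > 0" "t \<ge> 0"
  shows "real (nat \<lfloor>t / h\<rfloor>) * h \<le> t" "t < real (nat \<lfloor>t / h\<rfloor>) * h + h"
proof -
  have nn: "\<lfloor>t / h\<rfloor> \<ge> 0" using assms by simp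
  then have e: "real (nat \<lfloor>t / h\<rfloor>) = of_int \<lfloor>t / h\<rfloor>" by simp
  show "real (nat \<lfloor>t / h\<rfloor>) * h \<le> t" unfolding e using floor_divide_lower[OF assms(1)] by simp
  show "t < real (nat \<lfloor>t / h\<rfloor>) * h + h" unfolding e using floor_divide_upper[OF assms(1), of t]
    by (simp add: algebra_simps)
qed

lemma floor_mono_nat:
  assumes "h > 0" "t \<le> t'"
  shows "nat \<lfloor>t / h\<rfloor> \<le> nat \<lfloor>t' / h\<rfloor>"
  using assms by (intro nat_mono floor_mono divide_right_mono) auto

lemma one_over_n_tendsto: "(\<lambda>n. 1 / (real n + 1)) \<longlonglongrightarrow> 0"
  using LIMSEQ_inverse_real_of_nat by (simp add: inverse_eq_divide add.commute)

lemma PV: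
  fixes f :: "'b::euclidean_space \<Rightarrow> 'b"
  assumes S: "closed S" and fc: "continuous_on S f" and pS: "p \<in> S" and r0: "r > 0"
    and UT: "\<And>\<epsilon>. \<epsilon> > 0 \<Longrightarrow> \<exists>h0>0. \<forall>q\<in>S \<inter> cball p r. \<forall>h. 0 < h \<and> h \<le> h0 \<longrightarrow>
                 (\<exists>q'\<in>S. dist q' (q + h *\<^sub>R f q) \<le> \<epsilon> * h)"
  shows "\<exists>a>0. \<exists>y. y 0 = p \<and> (\<forall>t\<in>{0..a}. y t \<in> S \<and> (y has_vector_derivative f (y t)) (at t within {0..a}))"
proof -
  define K where "K = S \<inter> cball p r"
  have cK: "compact K" unfolding K_def using S by (simp add: closed_Int_compact)
  have KS: "K \<subseteq> S" unfolding K_def by auto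
  have fcK: "continuous_on K f" using fc KS continuous_on_subset by blast
  have "bounded (f ` K)" using compact_continuous_image[OF fcK cK] compact_imp_bounded by blast
  then obtain M0 where M0: "\<And>q. q \<in> K \<Longrightarrow> norm (f q) \<le> M0" unfolding bounded_iff by blast
  define M where "M = max 1 M0"
  have M1: "M \<ge> 1" and Mb: "\<And>q. q \<in> K \<Longrightarrow> norm (f q) \<le> M"
    unfolding M_def using M0 by force+
  define a where "a = r / (2 * M)"
  have a0: "a > 0" unfolding a_def using r0 M1 by simp
  have uc: "uniformly_continuous_on K f" by (rule compact_uniformly_continuous[OF fcK cK])
  have "\<forall>n::nat. \<exists>h0>0. \<forall>q\<in>K. \<forall>h. 0 < h \<and> h \<le> h0 \<longrightarrow> (\<exists>q'\<in>S. dist q' (q + h *\<^sub>R f q) \<le> (1 / (real n + 1)) * h)"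
  proof
    fix n :: nat
    have "1 / (real n + 1) > 0" by simp
    from UT[OF this] show "\<exists>h0>0. \<forall>q\<in>K. \<forall>h. 0 < h \<and> h \<le> h0 \<longrightarrow> (\<exists>q'\<in>S. dist q' (q + h *\<^sub>R f q) \<le> (1 / (real n + 1)) * h)"
      unfolding K_def .
  qed
  then obtain H where H0: "\<And>n. H n > 0"
    and H: "\<And>n q h. q \<in> K \<Longrightarrow> 0 < h \<Longrightarrow> h \<le> H n \<Longrightarrow> \<exists>q'\<in>S. dist q' (q + h *\<^sub>R f q) \<le> (1 / (real n + 1)) * h"
    by metis
  define hh where "hh n = min (H n) (1 / (real n + 1))" for n
  define ep where "ep n = 1 / (real n + 1)" for n :: nat
  have hpos: "hh n > 0" for n unfolding hh_def using H0 by simp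
  have ep0: "0 \<le> ep n" and ep1: "ep n \<le> 1" for n unfolding ep_def by auto
  define stp where "stp n q = (SOME q'. q' \<in> S \<and> dist q' (q + hh n *\<^sub>R f q) \<le> ep n * hh n)" for n q
  define X where "X n k = (stp n ^^ k) p" for n k
  have X0: "X n 0 = p" for n unfolding X_def by simp
  have Xstep: "X n (Suc k) \<in> S \<and> norm (X n (Suc k) - (X n k + hh n *\<^sub>R f (X n k))) \<le> ep n * hh n"
    if "X n k \<in> K" for n k
  proof -
    have "\<exists>q'. q' \<in> S \<and> dist q' (X n k + hh n *\<^sub>R f (X n k)) \<le> ep n * hh n"
      using H[OF that hpos[of n], of n] unfolding hh_def ep_def by auto
    then have "stp n (X n k) \<in> S \<and> dist (stp n (X n k)) (X n k + hh n *\<^sub>R f (X n k)) \<le> ep n * hh n"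
      unfolding stp_def by (rule someI_ex)
    moreover have "X n (Suc k) = stp n (X n k)" unfolding X_def by simp
    ultimately show ?thesis by (simp add: dist_norm)
  qed
  note Ein = euler_in_K[OF K_def r0 M1 Mb hpos ep0 ep1 X0 pS Xstep, folded a_def]
  note Einc = euler_incr[OF K_def r0 M1 Mb hpos ep0 ep1 X0 pS Xstep, folded a_def]
  note Elin = euler_lin[OF K_def r0 M1 Mb hpos ep0 ep1 X0 pS Xstep, folded a_def]
  define kk where "kk n t = nat \<lfloor>t / hh n\<rfloor>" for n t
  define Y where "Y n t = X n (kk n t)" for n t
  have kk1: "real (kk n t) * hh n \<le> t" and kk2: "t < real (kk n t) * hh n + hh n" if "t \<ge> 0" for n t
    unfolding kk_def using floor_bounds[OF hpos that] by auto
  have kkmono: "kk n t \<le> kk n t'" if "t \<le> t'" for n t t'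
    unfolding kk_def using floor_mono_nat[OF hpos that] .
  have YK: "Y n t \<in> K" if "t \<in> {0..a}" for n t
    using Ein[of n "kk n t"] kk1[of t n] that unfolding Y_def by auto
  have Ydist: "norm (Y n t' - Y n t) \<le> 2 * M * (t' - t + hh n)"
    if "t \<in> {0..a}" "t' \<in> {0..a}" "t \<le> t'" for n t t'
  proof -
    have m: "kk n t \<le> kk n t'" using kkmono that by auto
    have "real (kk n t + (kk n t' - kk n t)) * hh n \<le> a"
      using m kk1[of t' n] that by auto
    then have 1: "norm (Y n t' - Y n t) \<le> 2 * M * (real (kk n t' - kk n t) * hh n)"
      using Einc[of n "kk n t" "kk n t' - kk n t"] m unfolding Y_def by (auto simp: mult.assoc)
    have "real (kk n t' - kk n t) * hh n = real (kk n t') * hh n - real (kk n t) * hh n"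
      using m by (simp add: of_nat_diff algebra_simps)
    also have "\<dots> \<le> t' - t + hh n" using kk1[of t' n] kk2[of t n] that by auto
    finally have 2: "real (kk n t' - kk n t) * hh n \<le> t' - t + hh n" .
    have "2 * M * (real (kk n t' - kk n t) * hh n) \<le> 2 * M * (t' - t + hh n)"
      by (rule mult_left_mono[OF 2]) (use M1 in simp)
    then show ?thesis using 1 by linarith
  qed
  have Ydist2: "dist (Y n t) (Y n t') \<le> 2 * M * (\<bar>t - t'\<bar> + hh n)"
    if "t \<in> {0..a}" "t' \<in> {0..a}" for n t t'
  proof (cases "t \<le> t'")
    case True then show ?thesis using Ydist[OF that True] by (simp add: dist_norm norm_minus_commute)
  next
    case False then show ?thesis using Ydist[OF that(2,1)] by (simp add: dist_norm)
  qed
  obtain rr :: "nat \<Rightarrow> real" where rr: "range rr = \<rat>"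
    using range_from_nat_into[of "\<rat>"] countable_rat Rats_0 by blast
  define cl where "cl t = max 0 (min a t)" for t
  have cl01: "cl t \<in> {0..a}" for t unfolding cl_def using a0 by auto
  have cl_close: "\<bar>cl q - t\<bar> \<le> \<bar>q - t\<bar>" if "t \<in> {0..a}" for q t
    unfolding cl_def using that by auto
  obtain \<sigma> where \<sigma>: "strict_mono \<sigma>" and cnv: "\<And>k. convergent (\<lambda>n. Y (\<sigma> n) (cl (rr k)))"
    using diag_conv[OF cK, of "\<lambda>n k. Y n (cl (rr k))"] YK cl01 by blast
  have hh_le: "hh n \<le> 1 / (real n + 1)" for n unfolding hh_def by simp
  have hh_lim: "(\<lambda>n. hh n) \<longlonglongrightarrow> 0"
    by (rule tendsto_sandwich[OF _ _ tendsto_const one_over_n_tendsto])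
       (auto intro!: always_eventually less_imp_le[OF hpos] hh_le)
  have hs_lim: "(\<lambda>n. hh (\<sigma> n)) \<longlonglongrightarrow> 0"
    using LIMSEQ_subseq_LIMSEQ[OF hh_lim \<sigma>] by (simp add: comp_def)
  have ep_lim: "(\<lambda>n. ep n) \<longlonglongrightarrow> 0" unfolding ep_def by (rule one_over_n_tendsto)
  have es_lim: "(\<lambda>n. ep (\<sigma> n)) \<longlonglongrightarrow> 0"
    using LIMSEQ_subseq_LIMSEQ[OF ep_lim \<sigma>] by (simp add: comp_def)
  have conv_all: "convergent (\<lambda>n. Y (\<sigma> n) t)" if t: "t \<in> {0..a}" for t
  proof (rule Cauchy_convergent, rule metric_CauchyI)
    fix e :: real assume e: "e > 0"
    define e1 where "e1 = e / (16 * M)"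
    have e1: "e1 > 0" unfolding e1_def using e M1 by simp
    obtain q where q: "q \<in> \<rat>" "t - e1 < q" "q < t + e1"
      using Rats_dense_in_real[of "t - e1" "t + e1"] e1 by auto
    obtain k where k: "rr k = q" using rr q(1) by (metis rangeE)
    define c where "c = cl q"
    have c: "c \<in> {0..a}" "\<bar>t - c\<bar> \<le> e1" unfolding c_def using cl01 cl_close[OF t, of q] q by auto
    have "Cauchy (\<lambda>n. Y (\<sigma> n) c)" using cnv[of k] k c_def convergent_Cauchy by blast
    then obtain N1 where N1: "\<And>m n. m \<ge> N1 \<Longrightarrow> n \<ge> N1 \<Longrightarrow> dist (Y (\<sigma> m) c) (Y (\<sigma> n) c) < e / 4"
      using e by (metis metric_CauchyD zero_less_divide_iff zero_less_numeral)
    obtain N2 where N2: "\<And>n. n \<ge> N2 \<Longrightarrow> hh (\<sigma> n) < e1"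
      using hs_lim e1 by (metis (no_types, lifting) LIMSEQ_D diff_zero norm_of_real hpos abs_of_pos real_norm_def)
    show "\<exists>N. \<forall>m\<ge>N. \<forall>n\<ge>N. dist (Y (\<sigma> m) t) (Y (\<sigma> n) t) < e"
    proof (intro exI allI impI)
      fix m n assume m: "m \<ge> max N1 N2" and n: "n \<ge> max N1 N2"
      have bd: "dist (Y (\<sigma> j) t) (Y (\<sigma> j) c) \<le> e / 4" if "j \<ge> N2" for j
      proof -
        have "dist (Y (\<sigma> j) t) (Y (\<sigma> j) c) \<le> 2 * M * (\<bar>t - c\<bar> + hh (\<sigma> j))"
          by (rule Ydist2[OF t c(1)])
        also have "\<dots> \<le> 2 * M * (e1 + e1)"
          using c(2) N2[OF that] M1 by (intro mult_left_mono) auto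
        also have "\<dots> = e / 4" unfolding e1_def using M1 by (simp add: field_simps)
        finally show ?thesis .
      qed
      have "dist (Y (\<sigma> m) t) (Y (\<sigma> n) t) \<le> dist (Y (\<sigma> m) t) (Y (\<sigma> m) c) + dist (Y (\<sigma> m) c) (Y (\<sigma> n) c) + dist (Y (\<sigma> n) c) (Y (\<sigma> n) t)"
        by (meson dist_triangle order_trans add_right_mono)
      also have "\<dots> < e / 4 + e / 4 + e / 4"
        using bd[of m] bd[of n] N1[of m n] m n by (simp add: dist_commute)
      finally show "dist (Y (\<sigma> m) t) (Y (\<sigma> n) t) < e" using e by linarith
    qed
  qed
  define y where "y t = lim (\<lambda>n. Y (\<sigma> n) t)" for t
  have ylim: "(\<lambda>n. Y (\<sigma> n) t) \<longlonglongrightarrow> y t" if "t \<in> {0..a}" for t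
    unfolding y_def using conv_all[OF that] convergent_LIMSEQ_iff by blast
  have cKc: "closed K" using cK compact_imp_closed by blast
  have yK: "y t \<in> K" if "t \<in> {0..a}" for t
    using closed_sequentially[OF cKc _ ylim[OF that]] YK[OF that] by blast
  have Y0: "Y n 0 = p" for n unfolding Y_def kk_def using X0 by simp
  have y0: "y 0 = p"
    using ylim[of 0] a0 Y0 LIMSEQ_unique[OF _ tendsto_const] by auto
  have ydist: "dist (y t) (y t') \<le> 2 * M * \<bar>t - t'\<bar>" if "t \<in> {0..a}" "t' \<in> {0..a}" for t t'
  proof -
    have "(\<lambda>n. 2 * M * (\<bar>t - t'\<bar> + hh (\<sigma> n))) \<longlonglongrightarrow> 2 * M * (\<bar>t - t'\<bar> + 0)"
      by (intro tendsto_intros hs_lim)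
    then show ?thesis
      using tendsto_le[OF _ _ tendsto_dist[OF ylim[OF that(1)] ylim[OF that(2)]]] Ydist2[OF that] by simp
  qed
  have yS: "y t \<in> S" if "t \<in> {0..a}" for t using yK[OF that] KS by blast
  have D: "norm (y t' - y t - (t' - t) *\<^sub>R f (y t)) \<le> (t' - t) * e"
    if t: "t \<in> {0..a}" "t' \<in> {0..a}" "t \<le> t'" and e0: "e \<ge> 0" and d0: "\<delta> > 0"
      and ucd: "\<And>q q'. q \<in> K \<Longrightarrow> q' \<in> K \<Longrightarrow> dist q q' < \<delta> \<Longrightarrow> norm (f q - f q') \<le> e"
      and small: "2 * M * (t' - t) < \<delta>"
    for t t' e \<delta>
  proof -
    define dn where "dn n = kk (\<sigma> n) t' - kk (\<sigma> n) t" for n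
    have m: "kk (\<sigma> n) t \<le> kk (\<sigma> n) t'" for n using kkmono t by auto
    have dnh: "real (dn n) * hh (\<sigma> n) = real (kk (\<sigma> n) t') * hh (\<sigma> n) - real (kk (\<sigma> n) t) * hh (\<sigma> n)" for n
      unfolding dn_def using m[of n] by (simp add: of_nat_diff algebra_simps)
    have dn_lo: "t' - t - hh (\<sigma> n) \<le> real (dn n) * hh (\<sigma> n)" and dn_hi: "real (dn n) * hh (\<sigma> n) \<le> t' - t + hh (\<sigma> n)" for n
      unfolding dnh using kk1[of t' "\<sigma> n"] kk2[of t' "\<sigma> n"] kk1[of t "\<sigma> n"] kk2[of t "\<sigma> n"] t by auto
    have dn_lim: "(\<lambda>n. real (dn n) * hh (\<sigma> n)) \<longlonglongrightarrow> t' - t"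
    proof (rule tendsto_sandwich[of "\<lambda>n. t' - t - hh (\<sigma> n)" _ _ "\<lambda>n. t' - t + hh (\<sigma> n)"])
      show "\<forall>\<^sub>F n in sequentially. t' - t - hh (\<sigma> n) \<le> real (dn n) * hh (\<sigma> n)" using dn_lo by simp
      show "\<forall>\<^sub>F n in sequentially. real (dn n) * hh (\<sigma> n) \<le> t' - t + hh (\<sigma> n)" using dn_hi by simp
      show "(\<lambda>n. t' - t - hh (\<sigma> n)) \<longlonglongrightarrow> t' - t" using tendsto_diff[OF tendsto_const hs_lim] by simp
      show "(\<lambda>n. t' - t + hh (\<sigma> n)) \<longlonglongrightarrow> t' - t" using tendsto_add[OF tendsto_const hs_lim] by simp
    qed
    have fl: "(\<lambda>n. f (Y (\<sigma> n) t)) \<longlonglongrightarrow> f (y t)"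
      by (rule continuous_on_tendsto_compose[OF fc ylim[OF t(1)] yS[OF t(1)]])
         (use YK[OF t(1)] KS in \<open>auto intro!: always_eventually\<close>)
    have L: "(\<lambda>n. norm (Y (\<sigma> n) t' - Y (\<sigma> n) t - (real (dn n) * hh (\<sigma> n)) *\<^sub>R f (Y (\<sigma> n) t)))
        \<longlonglongrightarrow> norm (y t' - y t - (t' - t) *\<^sub>R f (y t))"
      by (intro tendsto_intros ylim t dn_lim fl)
    have R: "(\<lambda>n. (t' - t + hh (\<sigma> n)) * (ep (\<sigma> n) + e)) \<longlonglongrightarrow> (t' - t + 0) * (0 + e)"
      by (intro tendsto_intros hs_lim es_lim)
    have "(\<lambda>n. 2 * M * (t' - t + hh (\<sigma> n))) \<longlonglongrightarrow> 2 * M * (t' - t + 0)"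
      by (intro tendsto_intros hs_lim)
    with small have ev: "\<forall>\<^sub>F n in sequentially. 2 * M * (t' - t + hh (\<sigma> n)) < \<delta>"
      by (simp add: order_tendstoD(2))
    have "\<forall>\<^sub>F n in sequentially. norm (Y (\<sigma> n) t' - Y (\<sigma> n) t - (real (dn n) * hh (\<sigma> n)) *\<^sub>R f (Y (\<sigma> n) t))
        \<le> (t' - t + hh (\<sigma> n)) * (ep (\<sigma> n) + e)"
      using ev
    proof eventually_elim
      case (elim n)
      have le: "real (kk (\<sigma> n) t + dn n) * hh (\<sigma> n) \<le> a"
        using m[of n] kk1[of t' "\<sigma> n"] t unfolding dn_def by auto
      have "2 * M * (real (dn n) * hh (\<sigma> n)) \<le> 2 * M * (t' - t + hh (\<sigma> n))"
        by (rule mult_left_mono[OF dn_hi]) (use M1 in simp)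
      with elim have sm: "2 * M * real (dn n) * hh (\<sigma> n) < \<delta>" by (simp add: mult.assoc)
      have "norm (X (\<sigma> n) (kk (\<sigma> n) t + dn n) - X (\<sigma> n) (kk (\<sigma> n) t) - (real (dn n) * hh (\<sigma> n)) *\<^sub>R f (X (\<sigma> n) (kk (\<sigma> n) t)))
           \<le> real (dn n) * hh (\<sigma> n) * (ep (\<sigma> n) + e)"
        by (rule Elin[OF _ _ ucd e0 le sm]) auto
      moreover have "kk (\<sigma> n) t + dn n = kk (\<sigma> n) t'" unfolding dn_def using m[of n] by simp
      moreover have "real (dn n) * hh (\<sigma> n) * (ep (\<sigma> n) + e) \<le> (t' - t + hh (\<sigma> n)) * (ep (\<sigma> n) + e)"
        by (rule mult_right_mono[OF dn_hi]) (use e0 ep0 in auto)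
      ultimately show ?case unfolding Y_def by simp
    qed
    from tendsto_le[OF trivial_limit_sequentially R L this] show ?thesis by simp
  qed
  have deriv: "(y has_vector_derivative f (y t)) (at t within {0..a})" if t: "t \<in> {0..a}" for t
    unfolding has_vector_derivative_def has_derivative_within_alt
  proof (intro conjI allI impI bounded_linear_scaleR_left)
    fix e :: real assume e: "e > 0"
    then have "e / 2 > 0" by simp
    with uc obtain \<delta> where d0: "\<delta> > 0" and dd: "\<And>x x'. x \<in> K \<Longrightarrow> x' \<in> K \<Longrightarrow> dist x' x < \<delta> \<Longrightarrow> dist (f x') (f x) < e / 2"
      unfolding uniformly_continuous_on_def by metis
    have ucd: "norm (f q - f q') \<le> e / 2" if "q \<in> K" "q' \<in> K" "dist q q' < \<delta>" for q q'
      using dd[OF that(2,1)] that(3) by (simp add: dist_norm)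
    show "\<exists>d>0. \<forall>t'\<in>{0..a}. norm (t' - t) < d \<longrightarrow> norm (y t' - y t - (t' - t) *\<^sub>R f (y t)) \<le> e * norm (t' - t)"
    proof (intro exI conjI ballI impI)
      show "\<delta> / (2 * M) > 0" using d0 M1 by simp
      fix t' assume t': "t' \<in> {0..a}" and cl: "norm (t' - t) < \<delta> / (2 * M)"
      have sm: "2 * M * \<bar>t' - t\<bar> < \<delta>" using cl M1 by (simp add: field_simps)
      show "norm (y t' - y t - (t' - t) *\<^sub>R f (y t)) \<le> e * norm (t' - t)"
      proof (cases "t \<le> t'")
        case True
        have "norm (y t' - y t - (t' - t) *\<^sub>R f (y t)) \<le> (t' - t) * (e / 2)"
          by (rule D[OF t t' True _ d0 ucd]) (use e sm True in auto)
        also have "\<dots> \<le> e * norm (t' - t)" using True e by simp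
        finally show ?thesis .
      next
        case False
        have A: "norm (y t - y t' - (t - t') *\<^sub>R f (y t')) \<le> (t - t') * (e / 2)"
          by (rule D[OF t' t _ _ d0 ucd]) (use e sm False in auto)
        have "dist (y t) (y t') < \<delta>" using ydist[OF t t'] sm by (simp add: abs_minus_commute)
        then have B: "norm (f (y t) - f (y t')) \<le> e / 2" using ucd yK t t' by blast
        have eq: "y t' - y t - (t' - t) *\<^sub>R f (y t) = - (y t - y t' - (t - t') *\<^sub>R f (y t')) + (t - t') *\<^sub>R (f (y t) - f (y t'))"
          by (simp add: algebra_simps)
        have "norm (y t' - y t - (t' - t) *\<^sub>R f (y t)) \<le> (t - t') * (e / 2) + (t - t') * (e / 2)"
          unfolding eq
          apply (rule order_trans[OF norm_triangle_ineq])
          apply (rule add_mono)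
          subgoal using A by (simp only: norm_minus_cancel)
          subgoal using B False by (simp add: mult_left_mono)
          done
        also have "\<dots> = e * norm (t' - t)" using False by simp
        finally show ?thesis .
      qed
    qed
  qed
  show ?thesis
    using a0 y0 yS deriv by blast
qed

lemma g_le0:
  fixes g :: "'a::euclidean_space \<Rightarrow> real"
  assumes gd: "\<And>y. y \<in> ball z r0 \<Longrightarrow> (g has_derivative (\<lambda>h. G y \<bullet> h)) (at y)"
    and eq: "w \<inter> ball z r0 = {y\<in>ball z r0. g y < 0}"
    and y: "y \<in> ball z r0" "y \<in> closure w"
  shows "g y \<le> 0"
proof (rule ccontr)
  assume "\<not> g y \<le> 0"
  then have gy: "g y > 0" by simp
  have "continuous (at y) g" by (rule has_derivative_continuous[OF gd[OF y(1)]])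
  then have "\<forall>e>0. \<exists>d>0. \<forall>x'. dist x' y < d \<longrightarrow> dist (g x') (g y) < e"
    unfolding continuous_at_eps_delta .
  then obtain d where d: "d > 0" "\<And>x. dist x y < d \<Longrightarrow> dist (g x) (g y) < g y"
    using gy by blast
  obtain d2 where d2: "d2 > 0" "ball y d2 \<subseteq> ball z r0"
    using y(1) open_ball open_contains_ball by blast
  have md: "min d d2 > 0" using d d2 by simp
  obtain x where x: "x \<in> w" "dist x y < min d d2"
    using y(2) md unfolding closure_approachable by blast
  have "x \<in> ball y d2" using x(2) by (simp add: dist_commute)
  then have xb: "x \<in> ball z r0" using d2(2) by blast
  then have "x \<in> w \<inter> ball z r0" using x(1) by blast
  then have "x \<in> {y\<in>ball z r0. g y < 0}" unfolding eq .
  then have gx: "g x < 0" by blast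
  have "dist x y < d" using x(2) by linarith
  then have "dist (g x) (g y) < g y" by (rule d(2))
  then have "\<bar>g x - g y\<bar> < g y" by (simp only: dist_real_def)
  then show False using gx gy by linarith
qed

lemma g_eq0:
  fixes g :: "'a::euclidean_space \<Rightarrow> real"
  assumes "open w" and gd: "\<And>y. y \<in> ball z r0 \<Longrightarrow> (g has_derivative (\<lambda>h. G y \<bullet> h)) (at y)"
    and eq: "w \<inter> ball z r0 = {y\<in>ball z r0. g y < 0}"
    and y: "y \<in> ball z r0" "y \<in> frontier w"
  shows "g y = 0"
proof -
  have "y \<in> closure w" "y \<notin> w" using y(2) \<open>open w\<close> by (auto simp: frontier_def interior_open)
  have "g y \<le> 0"
    apply (rule g_le0[of z r0 g G w y])
    using gd apply blast
      apply (fact eq)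
     apply (fact y(1))
    by (fact \<open>y \<in> closure w\<close>)
  moreover have "\<not> g y < 0"
  proof
    assume "g y < 0"
    then have "y \<in> {y\<in>ball z r0. g y < 0}" using y(1) by blast
    then have "y \<in> w" unfolding eq[symmetric] by blast
    then show False using \<open>y \<notin> w\<close> by blast
  qed
  ultimately show ?thesis by linarith
qed

lemma dir_deriv:
  fixes g :: "'a::euclidean_space \<Rightarrow> real"
  assumes "(g has_derivative (\<lambda>h. G \<bullet> h)) (at y)"
  shows "((\<lambda>t. g (y + t *\<^sub>R d)) has_real_derivative (G \<bullet> d)) (at 0)"
proof -
  have l: "((\<lambda>t. y + t *\<^sub>R d) has_derivative (\<lambda>t. t *\<^sub>R d)) (at 0)"
    by (auto intro!: derivative_eq_intros)
  have c: "((\<lambda>t. g (y + t *\<^sub>R d)) has_derivative (\<lambda>t. G \<bullet> (t *\<^sub>R d))) (at 0)"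
    using has_derivative_compose[OF l, of g "\<lambda>h. G \<bullet> h"] assms by simp
  show ?thesis unfolding has_field_derivative_def
    by (rule has_derivative_eq_rhs[OF c]) (simp add: fun_eq_iff mult.commute)
qed

lemma normal_agree:
  fixes g1 g2 :: "'a::euclidean_space \<Rightarrow> real"
  assumes "open w"
    and gd1: "\<And>y. y \<in> ball z1 r1 \<Longrightarrow> (g1 has_derivative (\<lambda>h. G1 y \<bullet> h)) (at y)"
    and Gn1: "\<And>y. y \<in> ball z1 r1 \<Longrightarrow> G1 y \<noteq> 0"
    and eq1: "w \<inter> ball z1 r1 = {y\<in>ball z1 r1. g1 y < 0}"
    and gd2: "\<And>y. y \<in> ball z2 r2 \<Longrightarrow> (g2 has_derivative (\<lambda>h. G2 y \<bullet> h)) (at y)"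
    and Gn2: "\<And>y. y \<in> ball z2 r2 \<Longrightarrow> G2 y \<noteq> 0"
    and eq2: "w \<inter> ball z2 r2 = {y\<in>ball z2 r2. g2 y < 0}"
    and y: "y \<in> frontier w" "y \<in> ball z1 r1" "y \<in> ball z2 r2"
  shows "G1 y /\<^sub>R norm (G1 y) = G2 y /\<^sub>R norm (G2 y)"
proof (rule ccontr)
  define a where "a = G1 y /\<^sub>R norm (G1 y)"
  define b where "b = G2 y /\<^sub>R norm (G2 y)"
  assume "\<not> ?thesis"
  then have ab: "a \<noteq> b" unfolding a_def b_def .
  have na: "norm a = 1" and nb: "norm b = 1" unfolding a_def b_def using Gn1 Gn2 y by auto
  have aa: "a \<bullet> a = 1" using na by (simp add: norm_eq_1)
  have bb: "b \<bullet> b = 1" using nb by (simp add: norm_eq_1)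
  have "0 < norm (a - b) ^ 2" using ab by simp
  also have "norm (a - b) ^ 2 = 2 - 2 * (a \<bullet> b)"
    unfolding power2_norm_eq_inner
    by (simp add: inner_diff_left inner_diff_right inner_commute aa bb)
  finally have ablt: "a \<bullet> b < 1" by simp
  define d where "d = b - a"
  have G1a: "G1 y = norm (G1 y) *\<^sub>R a" unfolding a_def using Gn1 y by simp
  have G2b: "G2 y = norm (G2 y) *\<^sub>R b" unfolding b_def using Gn2 y by simp
  have d1: "G1 y \<bullet> d < 0"
  proof -
    have "G1 y \<bullet> d = norm (G1 y) * (a \<bullet> b - 1)"
      by (subst G1a) (simp add: d_def inner_diff_right aa algebra_simps)
    also have "\<dots> < 0" using Gn1 y ablt by (simp add: mult_pos_neg)
    finally show ?thesis .
  qed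
  have d2: "G2 y \<bullet> d > 0"
  proof -
    have "G2 y \<bullet> d = norm (G2 y) * (1 - a \<bullet> b)"
      by (subst G2b) (simp add: d_def inner_diff_right bb inner_commute algebra_simps)
    also have "\<dots> > 0" using Gn2 y ablt by simp
    finally show ?thesis .
  qed
  have g10: "g1 y = 0" by (rule g_eq0[OF \<open>open w\<close> gd1 eq1 y(2,1)])
  have g20: "g2 y = 0" by (rule g_eq0[OF \<open>open w\<close> gd2 eq2 y(3,1)])
  obtain e1 where e1: "e1 > 0" "\<And>t. t > 0 \<Longrightarrow> t < e1 \<Longrightarrow> g1 (y + t *\<^sub>R d) < 0"
    using DERIV_neg_dec_right[OF dir_deriv[OF gd1[OF y(2)], of d] d1] g10 by auto
  obtain e2 where e2: "e2 > 0" "\<And>t. t > 0 \<Longrightarrow> t < e2 \<Longrightarrow> g2 (y + t *\<^sub>R d) > 0"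
    using DERIV_pos_inc_right[OF dir_deriv[OF gd2[OF y(3)], of d] d2] g20 by auto
  obtain e3 where e3: "e3 > 0" "ball y e3 \<subseteq> ball z1 r1 \<inter> ball z2 r2"
    using y open_contains_ball[of "ball z1 r1 \<inter> ball z2 r2"] by blast
  have dn: "d \<noteq> 0" using ab unfolding d_def by simp
  define t where "t = min (min e1 e2) (e3 / norm d) / 2"
  have t0: "t > 0" unfolding t_def using e1 e2 e3 dn by simp
  have mpos: "min (min e1 e2) (e3 / norm d) > 0" using e1 e2 e3 dn by simp
  have "min (min e1 e2) (e3 / norm d) \<le> e1" "min (min e1 e2) (e3 / norm d) \<le> e2"
    "min (min e1 e2) (e3 / norm d) \<le> e3 / norm d" by auto
  then have te1: "t < e1" "t < e2" "t < e3 / norm d" unfolding t_def using mpos by linarith+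
  from te1(3) have "t * norm d < e3" using dn by (simp add: pos_less_divide_eq)
  then have "y + t *\<^sub>R d \<in> ball y e3" using t0 by (simp add: dist_norm)
  then have inb: "y + t *\<^sub>R d \<in> ball z1 r1" "y + t *\<^sub>R d \<in> ball z2 r2" using e3 by auto
  have "g1 (y + t *\<^sub>R d) < 0" using e1(2)[OF t0 te1(1)] .
  then have "y + t *\<^sub>R d \<in> {y\<in>ball z1 r1. g1 y < 0}" using inb(1) by blast
  then have "y + t *\<^sub>R d \<in> w \<inter> ball z2 r2" unfolding eq1[symmetric] using inb(2) by blast
  then have "y + t *\<^sub>R d \<in> {y\<in>ball z2 r2. g2 y < 0}" unfolding eq2 .
  then have "g2 (y + t *\<^sub>R d) < 0" by blast
  moreover have "g2 (y + t *\<^sub>R d) > 0" using e2(2)[OF t0 te1(2)] .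
  ultimately show False by linarith
qed

lemma lin_bound:
  fixes g :: "'a::euclidean_space \<Rightarrow> real"
  assumes U: "convex U" and gd: "\<And>x. x \<in> U \<Longrightarrow> (g has_derivative (\<lambda>h. G x \<bullet> h)) (at x)"
    and c: "c \<in> U" and a: "a \<in> U" and b: "b \<in> U"
    and B: "\<And>x. x \<in> U \<Longrightarrow> norm (G x - G c) \<le> e"
  shows "\<bar>g b - g a - G c \<bullet> (b - a)\<bar> \<le> e * norm (b - a)"
proof -
  have S: "a + t *\<^sub>R (b - a) \<in> U" if "t \<in> {0..1}" for t
  proof -
    have "(1 - t) *\<^sub>R a + t *\<^sub>R b \<in> U" using convexD[OF U a b] that by auto
    moreover have "(1 - t) *\<^sub>R a + t *\<^sub>R b = a + t *\<^sub>R (b - a)" by (simp add: algebra_simps)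
    ultimately show ?thesis by simp
  qed
  have d: "(g has_derivative (\<lambda>h. G x \<bullet> h)) (at x within U)" if "x \<in> U" for x
    using gd[OF that] by (rule has_derivative_at_withinI)
  have o: "onorm ((\<lambda>h. G x \<bullet> h) - (\<lambda>h. G c \<bullet> h)) \<le> e" if "x \<in> U" for x
  proof (rule onorm_le)
    fix h
    have "norm (((\<lambda>h. G x \<bullet> h) - (\<lambda>h. G c \<bullet> h)) h) = \<bar>(G x - G c) \<bullet> h\<bar>"
      by (simp add: inner_diff_left)
    also have "\<dots> \<le> norm (G x - G c) * norm h" by (rule Cauchy_Schwarz_ineq2)
    also have "\<dots> \<le> e * norm h" using B[OF that] by (simp add: mult_right_mono)
    finally show "norm (((\<lambda>h. G x \<bullet> h) - (\<lambda>h. G c \<bullet> h)) h) \<le> e * norm h" .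
  qed
  have "norm (g b - g a - G c \<bullet> (b - a)) \<le> norm (b - a) * e"
    by (rule differentiable_bound_linearization[where f' = "\<lambda>x h. G x \<bullet> h", OF S d o c])
  then show ?thesis by (simp add: mult.commute)
qed

lemma S_prod: "closure (UNIV \<times> w) = UNIV \<times> closure w"
  by (simp add: closure_Times)

lemma frontier_prod: "open w \<Longrightarrow> frontier (UNIV \<times> w) = UNIV \<times> frontier w"
  by (auto simp: frontier_def closure_Times interior_Times interior_open)

lemma bound_on_compact:
  fixes f :: "'b::euclidean_space \<Rightarrow> 'c::real_normed_vector"
  assumes "continuous_on K f" "compact K"
  obtains M where "M \<ge> 1" "\<And>q. q \<in> K \<Longrightarrow> norm (f q) \<le> M"
proof -
  have "bounded (f ` K)" using compact_continuous_image[OF assms(1,2)] compact_imp_bounded by blast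
  then obtain M0 where M0: "\<And>q. q \<in> K \<Longrightarrow> norm (f q) \<le> M0" unfolding bounded_iff by blast
  show ?thesis by (rule that[of "max 1 M0"]) (auto intro: order_trans[OF M0])
qed

lemma UT_int:
  fixes f :: "real \<times> 'a::euclidean_space \<Rightarrow> real \<times> 'a"
  assumes fc: "continuous_on (UNIV \<times> closure w) f" and z: "snd p \<in> w" and ow: "open w"
  shows "\<exists>r>0. \<forall>\<epsilon>>0. \<exists>h0>0. \<forall>q\<in>(UNIV \<times> closure w) \<inter> cball p r. \<forall>h. 0 < h \<and> h \<le> h0 \<longrightarrow>
           (\<exists>q'\<in>UNIV \<times> closure w. dist q' (q + h *\<^sub>R f q) \<le> \<epsilon> * h)"
proof -
  obtain r0 where r0: "r0 > 0" "cball (snd p) r0 \<subseteq> w" using ow z open_contains_cball by blast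
  define K where "K = (UNIV \<times> closure w) \<inter> cball p r0"
  have cK: "compact K" unfolding K_def
    by (intro closed_Int_compact closed_Times) auto
  have fcK: "continuous_on K f" using fc unfolding K_def by (rule continuous_on_subset) auto
  obtain M where M: "M \<ge> 1" "\<And>q. q \<in> K \<Longrightarrow> norm (f q) \<le> M" using bound_on_compact[OF fcK cK] by blast
  show ?thesis
  proof (intro exI conjI allI impI ballI)
    show "r0 / 2 > 0" using r0 by simp
    fix \<epsilon> :: real assume "\<epsilon> > 0"
    show "r0 / (2 * M) > 0" using r0 M by simp
    fix q h assume q: "q \<in> (UNIV \<times> closure w) \<inter> cball p (r0 / 2)" and h: "0 < h \<and> h \<le> r0 / (2 * M)"
    have qK: "q \<in> K" unfolding K_def using q r0 by auto
    have "dist (snd p) (snd q) \<le> dist p q" by (rule dist_snd_le)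
    also have "\<dots> \<le> r0 / 2" using q by auto
    finally have d1: "dist (snd p) (snd q) \<le> r0 / 2" .
    have "norm (snd (h *\<^sub>R f q)) \<le> norm (h *\<^sub>R f q)" by (metis norm_snd_le prod.collapse)
    also have "\<dots> = h * norm (f q)" using h by simp
    also have "\<dots> \<le> h * M" using M(2)[OF qK] h by (simp add: mult_left_mono)
    also have "\<dots> \<le> r0 / 2" using h M by (simp add: field_simps)
    finally have d2: "norm (snd (h *\<^sub>R f q)) \<le> r0 / 2" .
    have "dist (snd p) (snd q + snd (h *\<^sub>R f q)) \<le> dist (snd p) (snd q) + norm (snd (h *\<^sub>R f q))"
      by (metis dist_norm dist_triangle2 norm_minus_commute add_diff_cancel_left' diff_add_eq_diff_diff_swap dist_add_cancel2 order_refl)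
    with d1 d2 have "snd q + snd (h *\<^sub>R f q) \<in> cball (snd p) r0" by simp
    then have "snd (q + h *\<^sub>R f q) \<in> w" using r0 by auto
    then have "q + h *\<^sub>R f q \<in> UNIV \<times> closure w" using closure_subset by (auto simp: mem_Times_iff)
    then show "\<exists>q'\<in>UNIV \<times> closure w. dist q' (q + h *\<^sub>R f q) \<le> \<epsilon> * h"
      using \<open>\<epsilon> > 0\<close> h by (intro bexI[of _ "q + h *\<^sub>R f q"]) auto
  qed
qed

lemma UT_bd:
  fixes f :: "real \<times> 'a::euclidean_space \<Rightarrow> real \<times> 'a" and w :: "'a set"
  assumes ow: "open w" and C1: "C1_boundary_normal w nrm"
    and fc: "continuous_on (UNIV \<times> closure w) f"
    and tang: "\<And>s z'. z' \<in> frontier w \<Longrightarrow> snd (f (s, z')) \<bullet> nrm z' = 0"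
    and zf: "snd p \<in> frontier w"
  shows "\<exists>r>0. \<forall>\<epsilon>>0. \<exists>h0>0. \<forall>q\<in>(UNIV \<times> closure w) \<inter> cball p r. \<forall>h. 0 < h \<and> h \<le> h0 \<longrightarrow>
           (\<exists>q'\<in>UNIV \<times> closure w. dist q' (q + h *\<^sub>R f q) \<le> \<epsilon> * h)"
proof -
  define z where "z = snd p"
  have "\<exists>r>0. \<exists>g G. (\<forall>y\<in>ball z r. (g has_derivative (\<lambda>h. G y \<bullet> h)) (at y) \<and> G y \<noteq> 0) \<and>
        continuous_on (ball z r) G \<and> w \<inter> ball z r = {y\<in>ball z r. g y < 0} \<and> nrm z = G z /\<^sub>R norm (G z)"
    using C1 zf unfolding C1_boundary_normal_def z_def by (rule bspec)
  then obtain r0 g G where r0: "r0 > 0"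
    and gG: "\<forall>y\<in>ball z r0. (g has_derivative (\<lambda>h. G y \<bullet> h)) (at y) \<and> G y \<noteq> 0"
    and Gc: "continuous_on (ball z r0) G" and eq: "w \<inter> ball z r0 = {y\<in>ball z r0. g y < 0}"
    by blast
  have gd: "\<And>y. y \<in> ball z r0 \<Longrightarrow> (g has_derivative (\<lambda>h. G y \<bullet> h)) (at y)" using gG by blast
  have Gn: "\<And>y. y \<in> ball z r0 \<Longrightarrow> G y \<noteq> 0" using gG by blast
  have zb: "z \<in> ball z r0" using r0 by simp
  define nG where "nG = norm (G z)"
  have nG: "nG > 0" unfolding nG_def using Gn[OF zb] by simp
  define e where "e = G z /\<^sub>R nG"
  have ne: "norm e = 1" unfolding e_def using nG nG_def by simp
  have Gze: "G z \<bullet> e = nG" unfolding e_def nG_def using nG nG_def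
    by (simp add: power2_norm_eq_inner[symmetric] power2_eq_square)
  have "\<exists>d>0. \<forall>x'\<in>ball z r0. dist x' z < d \<longrightarrow> dist (G x') (G z) < nG / 4"
  proof -
    have "nG / 4 > 0" using nG by simp
    then show ?thesis using Gc zb unfolding continuous_on_iff by blast
  qed
  then obtain d1 where d1: "d1 > 0" "\<And>x'. x' \<in> ball z r0 \<Longrightarrow> dist x' z < d1 \<Longrightarrow> dist (G x') (G z) < nG / 4"
    by blast
  define r1 where "r1 = min d1 r0 / 2"
  have r1: "r1 > 0" unfolding r1_def using d1 r0 by simp
  define B where "B = cball z r1"
  have Bsub: "B \<subseteq> ball z r0" unfolding B_def r1_def using r0 d1 by (auto simp: subset_iff)
  have cB: "convex B" "compact B" unfolding B_def by auto
  have GB: "norm (G x - G z) \<le> nG / 4" if "x \<in> B" for x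
  proof -
    have "dist x z < d1" using that d1 unfolding B_def r1_def by (auto simp: dist_commute)
    then show ?thesis using d1(2)[of x] Bsub that by (auto simp: dist_norm)
  qed
  have GBe: "G x \<bullet> e \<ge> 3 * nG / 4" if "x \<in> B" for x
  proof -
    have "G x \<bullet> e = G z \<bullet> e + (G x - G z) \<bullet> e" by (simp add: inner_diff_left)
    moreover have "\<bar>(G x - G z) \<bullet> e\<bar> \<le> norm (G x - G z)" using Cauchy_Schwarz_ineq2[of "G x - G z" e] ne by simp
    ultimately show ?thesis using GB[OF that] Gze by linarith
  qed
  have GBn: "norm (G x) \<le> 2 * nG" if "x \<in> B" for x
  proof -
    have "norm (G x) \<le> norm (G z) + norm (G x - G z)" by (metis norm_triangle_sub add.commute)
    then show ?thesis using GB[OF that] nG unfolding nG_def by linarith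
  qed
  have gdB: "\<And>x. x \<in> B \<Longrightarrow> (g has_derivative (\<lambda>h. G x \<bullet> h)) (at x)" using gd Bsub by blast
  define S where "S = (UNIV :: real set) \<times> closure w"
  define K1 where "K1 = S \<inter> cball p r1"
  have cK1: "compact K1" unfolding K1_def S_def by (intro closed_Int_compact closed_Times) auto
  have K1S: "K1 \<subseteq> S" unfolding K1_def by auto
  have fcK1: "continuous_on K1 f" using fc K1S unfolding S_def by (rule continuous_on_subset)
  obtain M where M: "M \<ge> 1" "\<And>q. q \<in> K1 \<Longrightarrow> norm (f q) \<le> M" using bound_on_compact[OF fcK1 cK1] by blast
  have ucf: "uniformly_continuous_on K1 f" by (rule compact_uniformly_continuous[OF fcK1 cK1])
  have GcB: "continuous_on B G" using Gc Bsub continuous_on_subset by blast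
  have ucG: "uniformly_continuous_on B G" by (rule compact_uniformly_continuous[OF GcB cB(2)])
  define C where "C = 2 * nG * (M + 1) + 1"
  define \<kappa> where "\<kappa> = (M + 1) + 2 * C / nG"
  have C0: "C > 0" unfolding C_def using nG M by (simp add: add_pos_pos)
  have \<kappa>0: "\<kappa> > 0" unfolding \<kappa>_def using C0 nG M by (simp add: add_pos_pos)
  have \<kappa>M: "M + 1 \<le> \<kappa>" "2 * C / nG \<le> \<kappa>" unfolding \<kappa>_def using C0 nG M by auto
  show ?thesis
  proof (rule exI[of _ "r1 / 2"], intro conjI allI impI)
    show "r1 / 2 > 0" using r1 by simp
    fix \<epsilon> :: real assume \<epsilon>: "\<epsilon> > 0"
    define \<epsilon>' where "\<epsilon>' = min \<epsilon> 1"
    have \<epsilon>': "\<epsilon>' > 0" "\<epsilon>' \<le> 1" "\<epsilon>' \<le> \<epsilon>" unfolding \<epsilon>'_def using \<epsilon> by auto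
    define e1 where "e1 = \<epsilon>' * nG / (8 * (M + 1))"
    define e2 where "e2 = \<epsilon>' / 8"
    have e1: "e1 > 0" unfolding e1_def using \<epsilon>' nG M by simp
    have e2: "e2 > 0" unfolding e2_def using \<epsilon>' by simp
    obtain \<delta>1 where \<delta>1: "\<delta>1 > 0" "\<And>x x'. x \<in> B \<Longrightarrow> x' \<in> B \<Longrightarrow> dist x' x < \<delta>1 \<Longrightarrow> dist (G x') (G x) < e1"
      using ucG e1 unfolding uniformly_continuous_on_def by metis
    obtain \<delta>f where \<delta>f: "\<delta>f > 0" "\<And>x x'. x \<in> K1 \<Longrightarrow> x' \<in> K1 \<Longrightarrow> dist x' x < \<delta>f \<Longrightarrow> dist (f x') (f x) < e2"
      using ucf e2 unfolding uniformly_continuous_on_def by metis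
    define h0 where "h0 = min (r1 / 2) (min \<delta>1 \<delta>f / 2) / \<kappa>"
    show "\<exists>h0>0. \<forall>q\<in>(UNIV \<times> closure w) \<inter> cball p (r1 / 2). \<forall>h. 0 < h \<and> h \<le> h0 \<longrightarrow>
           (\<exists>q'\<in>UNIV \<times> closure w. dist q' (q + h *\<^sub>R f q) \<le> \<epsilon> * h)"
    proof (rule exI[of _ h0], intro conjI ballI allI impI)
    show "h0 > 0" unfolding h0_def using r1 \<delta>1 \<delta>f \<kappa>0 by simp
    fix q h assume q: "q \<in> (UNIV \<times> closure w) \<inter> cball p (r1 / 2)" and h: "0 < h \<and> h \<le> h0"
    have hk0: "h * \<kappa> \<le> min (r1 / 2) (min \<delta>1 \<delta>f / 2)"
      using h \<kappa>0 unfolding h0_def by (simp add: pos_le_divide_eq)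
    have hk: "h * \<kappa> \<le> r1 / 2" "h * \<kappa> < \<delta>1" "h * \<kappa> < \<delta>f"
      using hk0 \<delta>1 \<delta>f by auto
    have h0': "h > 0" using h by simp
    obtain s y where qsy: "q = (s, y)" by (cases q)
    have yw: "y \<in> closure w" using q qsy by auto
    have "dist z y \<le> dist p q" unfolding z_def using dist_snd_le[of p q] qsy by simp
    then have dzy: "dist z y \<le> r1 / 2" using q by auto
    have qK1: "q \<in> K1" unfolding K1_def S_def using q r1 by auto
    define u where "u = snd (f q)"
    have "norm (snd (f q)) \<le> norm (f q)" by (metis norm_snd_le prod.collapse)
    then have nu: "norm u \<le> M" unfolding u_def using M(2)[OF qK1] by simp
    define y' where "y' = y + h *\<^sub>R u - (h * \<epsilon>') *\<^sub>R e"
    have "norm (y' - y) = norm (h *\<^sub>R u - (h * \<epsilon>') *\<^sub>R e)" unfolding y'_def by (simp add: algebra_simps)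
    also have "\<dots> \<le> norm (h *\<^sub>R u) + norm ((h * \<epsilon>') *\<^sub>R e)" by (rule norm_triangle_ineq4)
    also have "\<dots> = h * norm u + h * \<epsilon>'" using h0' \<epsilon>' ne by simp
    also have "\<dots> \<le> h * M + h * 1" using nu \<epsilon>' h0' by (intro add_mono mult_left_mono) auto
    finally have dy': "norm (y' - y) \<le> h * (M + 1)" by (simp add: algebra_simps)
    have hM: "h * (M + 1) \<le> h * \<kappa>" using \<kappa>M h0' by (simp add: mult_left_mono)
    have yB: "y \<in> B" unfolding B_def using dzy r1 by simp
    have "dist z y' \<le> dist z y + dist y y'" by (rule dist_triangle)
    also have "\<dots> \<le> r1 / 2 + h * \<kappa>" using dzy dy' hM by (simp add: dist_norm norm_minus_commute)
    also have "\<dots> \<le> r1" using hk by simp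
    finally have y'B: "y' \<in> B" unfolding B_def by simp
    have zB: "z \<in> B" unfolding B_def using r1 by simp
    have gy: "g y \<le> 0"
      apply (rule g_le0[of z r0 g G w y])
      using gd apply blast
        apply (fact eq)
      using Bsub yB apply blast
      by (fact yw)
    have neg: "g y' < 0"
    proof (cases "g y \<le> - (h * C)")
      case True
      have L: "\<bar>g y' - g y - G z \<bullet> (y' - y)\<bar> \<le> nG / 4 * norm (y' - y)"
        by (rule lin_bound[OF cB(1) gdB zB yB y'B GB])
      have "\<bar>G z \<bullet> (y' - y)\<bar> \<le> norm (G z) * norm (y' - y)" by (rule Cauchy_Schwarz_ineq2)
      then have "g y' \<le> g y + 2 * nG * norm (y' - y)" using L nG unfolding nG_def by linarith
      also have "\<dots> \<le> - (h * C) + 2 * nG * (h * (M + 1))"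
        using True dy' nG by (intro add_mono mult_left_mono) auto
      also have "\<dots> = - h" unfolding C_def by (simp add: algebra_simps)
      finally show ?thesis using h0' by linarith
    next
      case False
      define T where "T = h * (2 * C / nG)"
      have T0: "T > 0" unfolding T_def using h0' C0 nG by simp
      have Tk: "T \<le> h * \<kappa>" unfolding T_def using mult_left_mono[OF \<kappa>M(2), of h] h0' by simp
      define yT where "yT = y + T *\<^sub>R e"
      have dyT: "dist y yT = T" unfolding yT_def using ne T0 by (simp add: dist_norm)
      have "dist z yT \<le> dist z y + dist y yT" by (rule dist_triangle)
      also have "\<dots> \<le> r1" using dzy dyT Tk hk by simp
      finally have yTB: "yT \<in> B" unfolding B_def by simp
      have L: "\<bar>g yT - g y - G z \<bullet> (yT - y)\<bar> \<le> nG / 4 * norm (yT - y)"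
        by (rule lin_bound[OF cB(1) gdB zB yB yTB GB])
      have "G z \<bullet> (yT - y) = T * nG" unfolding yT_def using Gze by simp
      moreover have "norm (yT - y) = T" unfolding yT_def using ne T0 by simp
      ultimately have L': "\<bar>g yT - g y - T * nG\<bar> \<le> nG / 4 * T" using L by simp
      have "nG / 4 * T = (T * nG) / 4" by simp
      with L' have "g yT \<ge> g y + 3 / 4 * (T * nG)" by linarith
      moreover have "T * nG = 2 * (h * C)" unfolding T_def using nG by simp
      ultimately have "g yT \<ge> g y + 3 / 2 * (h * C)" by (simp add: mult.commute)
      with False have gyT: "g yT > 0" using mult_pos_pos[OF h0' C0] by linarith
      have yTnw: "yT \<notin> w"
      proof
        assume "yT \<in> w"
        then have "yT \<in> w \<inter> ball z r0" using yTB Bsub by blast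
        then have "yT \<in> {y\<in>ball z r0. g y < 0}" unfolding eq .
        then show False using gyT by simp
      qed
      obtain z' where z': "z' \<in> frontier w" "z' \<in> closed_segment y yT"
      proof (cases "y \<in> w")
        case True
        have "closed_segment y yT \<inter> frontier w \<noteq> {}"
          by (rule connected_Int_frontier) (use True yTnw in auto)
        then show ?thesis using that by blast
      next
        case False
        then have "y \<in> frontier w" using yw ow by (simp add: frontier_def interior_open)
        then show ?thesis using that by auto
      qed
      have dz': "dist z' y \<le> T" using dist_in_closed_segment[OF z'(2)] dyT by simp
      have z'B: "z' \<in> B" using closed_segment_subset[OF yB yTB cB(1)] z'(2) by blast
      have z'b: "z' \<in> ball z r0" using z'B Bsub by blast
      have "\<exists>r>0. \<exists>g G. (\<forall>y\<in>ball z' r. (g has_derivative (\<lambda>h. G y \<bullet> h)) (at y) \<and> G y \<noteq> 0) \<and>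
        continuous_on (ball z' r) G \<and> w \<inter> ball z' r = {y\<in>ball z' r. g y < 0} \<and> nrm z' = G z' /\<^sub>R norm (G z')"
        using C1 z'(1) unfolding C1_boundary_normal_def by (rule bspec)
      then obtain r' g' G' where r': "r' > 0"
        and gG': "\<forall>y\<in>ball z' r'. (g' has_derivative (\<lambda>h. G' y \<bullet> h)) (at y) \<and> G' y \<noteq> 0"
        and eq': "w \<inter> ball z' r' = {y\<in>ball z' r'. g' y < 0}" and nz': "nrm z' = G' z' /\<^sub>R norm (G' z')"
        by blast
      have gd': "\<And>y. y \<in> ball z' r' \<Longrightarrow> (g' has_derivative (\<lambda>h. G' y \<bullet> h)) (at y)" using gG' by blast
      have Gn': "\<And>y. y \<in> ball z' r' \<Longrightarrow> G' y \<noteq> 0" using gG' by blast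
      have "G z' /\<^sub>R norm (G z') = G' z' /\<^sub>R norm (G' z')"
        apply (rule normal_agree[of w z r0 g G z' r' g' G' z'])
                apply (fact ow)
               apply (erule gd)
              apply (erule Gn)
             apply (fact eq)
          apply (erule gd')
          apply (erule Gn')
          apply (fact eq')
         apply (fact z'(1))
        apply (fact z'b)
        using r' by simp
      then have nrmz': "nrm z' = G z' /\<^sub>R norm (G z')" using nz' by simp
      define u' where "u' = snd (f (s, z'))"
      have "u' \<bullet> nrm z' = 0" unfolding u'_def by (rule tang[OF z'(1)])
      then have "u' \<bullet> G z' = 0" unfolding nrmz' using Gn[OF z'b] by (simp add: inner_commute)
      then have Gu': "G z' \<bullet> u' = 0" by (simp add: inner_commute)
      have z'cl: "z' \<in> closure w" using z'(1) by (simp add: frontier_def)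
      have "dist p (s, z') \<le> dist p (s, y) + dist (s, y) (s, z')" by (rule dist_triangle)
      also have "dist (s, y) (s, z') = dist y z'" by (simp add: dist_Pair_Pair)
      finally have "dist p (s, z') \<le> r1" using q qsy dz' Tk hk by (simp add: dist_commute)
      then have sz'K: "(s, z') \<in> K1" unfolding K1_def S_def using z'cl by simp
      have "dist (s, z') q < \<delta>f" using qsy dz' Tk hk by (simp add: dist_Pair_Pair dist_commute)
      then have "dist (f (s, z')) (f q) < e2" using \<delta>f(2)[OF qK1 sz'K] by blast
      moreover have "norm (u - u') \<le> dist (f (s, z')) (f q)" unfolding u_def u'_def
        using dist_snd_le[of "f q" "f (s, z')"] by (simp add: dist_norm norm_minus_commute)
      ultimately have uu': "norm (u - u') \<le> e2" by linarith
      define U where "U = B \<inter> ball z' \<delta>1"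
      have cU: "convex U" unfolding U_def using cB(1) by (simp add: convex_Int)
      have z'U: "z' \<in> U" unfolding U_def using z'B \<delta>1 by simp
      have yU: "y \<in> U" unfolding U_def using yB dz' Tk hk by (simp add: dist_commute)
      have "dist z' y' \<le> dist z' y + dist y y'" by (rule dist_triangle)
      also have "\<dots> \<le> T + h * (M + 1)" using dz' dy' by (simp add: dist_commute dist_norm norm_minus_commute)
      also have "\<dots> = h * \<kappa>" unfolding T_def \<kappa>_def by (simp add: algebra_simps)
      finally have y'U: "y' \<in> U" unfolding U_def using y'B hk by simp
      have GU: "norm (G x - G z') \<le> e1" if "x \<in> U" for x
      proof -
        have "x \<in> B" "dist x z' < \<delta>1" using that unfolding U_def by (auto simp: dist_commute)
        then show ?thesis using \<delta>1(2)[OF z'B, of x] by (simp add: dist_norm)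
      qed
      have gdU: "\<And>x. x \<in> U \<Longrightarrow> (g has_derivative (\<lambda>h. G x \<bullet> h)) (at x)" using gdB unfolding U_def by blast
      have L2: "\<bar>g y' - g y - G z' \<bullet> (y' - y)\<bar> \<le> e1 * norm (y' - y)"
        by (rule lin_bound[OF cU gdU z'U yU y'U GU])
      have "G z' \<bullet> (y' - y) = h * (G z' \<bullet> u) - (h * \<epsilon>') * (G z' \<bullet> e)"
        unfolding y'_def by (simp add: inner_diff_right)
      moreover have "G z' \<bullet> u = G z' \<bullet> (u - u')" using Gu' by (simp add: inner_diff_right)
      moreover have "\<bar>G z' \<bullet> (u - u')\<bar> \<le> norm (G z') * norm (u - u')" by (rule Cauchy_Schwarz_ineq2)
      moreover have "norm (G z') * norm (u - u') \<le> 2 * nG * e2"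
        using GBn[OF z'B] uu' nG by (intro mult_mono) auto
      ultimately have "G z' \<bullet> u \<le> 2 * nG * e2" by linarith
      then have A1: "h * (G z' \<bullet> u) \<le> h * (2 * nG * e2)" using h0' by (simp add: mult_left_mono)
      have A2: "(h * \<epsilon>') * (3 * nG / 4) \<le> (h * \<epsilon>') * (G z' \<bullet> e)"
        using GBe[OF z'B] h0' \<epsilon>' by (intro mult_left_mono) auto
      have A3: "e1 * norm (y' - y) \<le> e1 * (h * (M + 1))" using dy' e1 by (simp add: mult_left_mono)
      have "g y' \<le> g y + G z' \<bullet> (y' - y) + e1 * norm (y' - y)" using L2 by linarith
      also have "\<dots> \<le> 0 + (h * (2 * nG * e2) - (h * \<epsilon>') * (3 * nG / 4)) + e1 * (h * (M + 1))"
        using gy A1 A2 A3 \<open>G z' \<bullet> (y' - y) = h * (G z' \<bullet> u) - (h * \<epsilon>') * (G z' \<bullet> e)\<close> by linarith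
      also have "\<dots> = - (3 / 8) * (h * \<epsilon>' * nG)"
        unfolding e1_def e2_def using M by (simp add: field_simps)
      also have "\<dots> < 0" using h0' \<epsilon>' nG by simp
      finally show ?thesis .
    qed
    have "y' \<in> ball z r0" using y'B Bsub by blast
    then have "y' \<in> {y\<in>ball z r0. g y < 0}" using neg by blast
    then have "y' \<in> w \<inter> ball z r0" unfolding eq .
    then have y'w: "y' \<in> closure w" using closure_subset by blast
    have qf: "q + h *\<^sub>R f q = (s + h * fst (f q), y + h *\<^sub>R u)" unfolding u_def
      by (simp add: qsy prod_eq_iff)
    have "dist (s + h * fst (f q), y') (q + h *\<^sub>R f q) = norm (y' - (y + h *\<^sub>R u))"
      unfolding qf by (simp add: dist_Pair_Pair dist_norm)
    also have "\<dots> = h * \<epsilon>'" unfolding y'_def using ne h0' \<epsilon>' by simp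
    also have "\<dots> \<le> \<epsilon> * h" using \<epsilon>' h0' by (simp add: mult.commute mult_left_mono)
    finally show "\<exists>q'\<in>UNIV \<times> closure w. dist q' (q + h *\<^sub>R f q) \<le> \<epsilon> * h"
      using y'w by (intro bexI[of _ "(s + h * fst (f q), y')"]) auto
  qed
  qed
qed

lemma local_exist:
  fixes f :: "real \<times> 'a::euclidean_space \<Rightarrow> real \<times> 'a" and w :: "'a set"
  assumes ow: "open w" and C1: "C1_boundary_normal w nrm"
    and fc: "continuous_on (closure (UNIV \<times> w)) f"
    and tang: "\<forall>p\<in>frontier (UNIV \<times> w). f p \<bullet> (0, nrm (snd p)) = 0"
    and pS: "p \<in> closure (UNIV \<times> w)"
  shows "\<exists>a>0. \<exists>y. y 0 = p \<and> (\<forall>t\<in>{0..a}. y t \<in> closure (UNIV \<times> w) \<and>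
            (y has_vector_derivative f (y t)) (at t within {0..a}))"
proof -
  have Seq: "closure (UNIV \<times> w) = UNIV \<times> closure w" by (rule S_prod)
  have fc': "continuous_on (UNIV \<times> closure w) f" using fc unfolding Seq .
  have tang': "snd (f (s, z')) \<bullet> nrm z' = 0" if "z' \<in> frontier w" for s z'
  proof -
    have "(s, z') \<in> frontier (UNIV \<times> w)" unfolding frontier_prod[OF ow] using that by simp
    then have "f (s, z') \<bullet> (0, nrm z') = 0" using tang by force
    then show ?thesis by (simp add: inner_Pair_0)
  qed
  have pc: "snd p \<in> closure w" using pS unfolding Seq by (auto simp: mem_Times_iff)
  obtain r where r: "r > 0" and UT: "\<forall>\<epsilon>>0. \<exists>h0>0. \<forall>q\<in>(UNIV \<times> closure w) \<inter> cball p r. \<forall>h. 0 < h \<and> h \<le> h0 \<longrightarrow>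
           (\<exists>q'\<in>UNIV \<times> closure w. dist q' (q + h *\<^sub>R f q) \<le> \<epsilon> * h)"
  proof (cases "snd p \<in> w")
    case True
    then show ?thesis using UT_int[OF fc' True ow] that by blast
  next
    case False
    then have "snd p \<in> frontier w" using pc ow by (simp add: frontier_def interior_open)
    then show ?thesis using UT_bd[OF ow C1 fc' tang'] that by blast
  qed
  have cS: "closed ((UNIV :: real set) \<times> closure w)" by (intro closed_Times) auto
  have pS': "p \<in> UNIV \<times> closure w" using pS unfolding Seq .
  show ?thesis unfolding Seq
    by (rule PV[OF cS fc' pS' r]) (use UT in blast)
qed

context
  fixes v :: "'b::euclidean_space \<Rightarrow> 'b" and psi :: "'b \<Rightarrow> real" and S :: "'b set"
    and \<eta> :: real and x :: 'b and I :: "real set" and xi :: "real \<Rightarrow> 'b"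
  assumes cS: "closed S"
    and psid: "\<And>p. p \<in> S \<Longrightarrow> (psi has_derivative (\<lambda>h. v p \<bullet> h)) (at p within S)"
    and psic: "continuous_on S psi"
    and vc: "continuous_on S v"
    and eta0: "\<eta> > 0" and etab: "\<And>p. p \<in> S \<Longrightarrow> \<eta> \<le> norm (v p)"
    and LE: "\<And>p. p \<in> S \<Longrightarrow> \<exists>a>0. \<exists>y. y 0 = p \<and> (\<forall>t\<in>{0..a}. y t \<in> S \<and>
                (y has_vector_derivative v (y t)) (at t within {0..a}))"
    and mf: "max_flow_sol v S x I xi"
begin

lemma fs: "flow_sol v S x I xi" using mf unfolding max_flow_sol_def by blast

lemma II: "is_interval I" "open I" "0 \<in> I" "xi 0 = x"
  using fs unfolding flow_sol_def by auto

lemma xiS: "t \<in> I \<Longrightarrow> xi t \<in> S" using fs unfolding flow_sol_def by blast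

lemma xid: "t \<in> I \<Longrightarrow> (xi has_vector_derivative v (xi t)) (at t)"
  using fs unfolding flow_sol_def by blast

lemma intv: "a \<in> I \<Longrightarrow> b \<in> I \<Longrightarrow> a \<le> t \<Longrightarrow> t \<le> b \<Longrightarrow> t \<in> I"
  using II(1) unfolding is_interval_1 by blast

lemma Phi_deriv:
  assumes t: "t \<in> I"
  shows "((\<lambda>t. psi (xi t)) has_real_derivative (norm (v (xi t)))\<^sup>2) (at t)"
proof -
  have xd: "(xi has_derivative (\<lambda>h. h *\<^sub>R v (xi t))) (at t within I)"
    using xid[OF t] unfolding has_vector_derivative_def by (rule has_derivative_at_withinI)
  have img: "xi ` I \<subseteq> S" using xiS by blast
  have "((\<lambda>s. psi (xi s)) has_derivative (\<lambda>h. v (xi t) \<bullet> (h *\<^sub>R v (xi t)))) (at t within I)"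
    by (rule has_derivative_in_compose2[of S psi "\<lambda>p h. v p \<bullet> h", OF psid img t xd])
  then have "((\<lambda>s. psi (xi s)) has_derivative (\<lambda>h. v (xi t) \<bullet> (h *\<^sub>R v (xi t)))) (at t)"
    using at_within_open[OF t II(2)] by simp
  then show ?thesis unfolding has_field_derivative_def
    by (rule has_derivative_eq_rhs) (simp add: fun_eq_iff power2_norm_eq_inner mult.commute)
qed

lemma Phi_mono:
  assumes "t \<in> I" "t' \<in> I" "t \<le> t'"
  shows "psi (xi t) + \<eta>\<^sup>2 * (t' - t) \<le> psi (xi t')"
proof -
  have "(\<lambda>s. psi (xi s) - \<eta>\<^sup>2 * s) t \<le> (\<lambda>s. psi (xi s) - \<eta>\<^sup>2 * s) t'"
  proof (rule DERIV_nonneg_imp_nondecreasing[OF assms(3)])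
    fix s assume s: "t \<le> s" "s \<le> t'"
    then have sI: "s \<in> I" using intv assms by blast
    have "((\<lambda>s. psi (xi s) - \<eta>\<^sup>2 * s) has_real_derivative ((norm (v (xi s)))\<^sup>2 - \<eta>\<^sup>2)) (at s)"
      by (auto intro!: derivative_eq_intros Phi_deriv[OF sI])
    moreover have "\<eta>\<^sup>2 \<le> (norm (v (xi s)))\<^sup>2"
      using etab[OF xiS[OF sI]] eta0 by (simp add: power_mono)
    ultimately show "\<exists>y. ((\<lambda>s. psi (xi s) - \<eta>\<^sup>2 * s) has_real_derivative y) (at s) \<and> 0 \<le> y" by auto
  qed
  then show ?thesis by (simp add: algebra_simps)
qed

lemma xi_lip:
  assumes "t \<in> I" "t' \<in> I" "t \<le> t'"
  shows "norm (xi t' - xi t) \<le> (psi (xi t') - psi (xi t)) / \<eta>"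
proof (cases "xi t' = xi t")
  case True
  then show ?thesis using Phi_mono[OF assms] eta0 assms(3) by (simp add: divide_nonneg_pos)
next
  case False
  define c where "c = (xi t' - xi t) /\<^sub>R norm (xi t' - xi t)"
  have nc: "norm c = 1" unfolding c_def using False by simp
  have "(\<lambda>s. psi (xi s) / \<eta> - c \<bullet> xi s) t \<le> (\<lambda>s. psi (xi s) / \<eta> - c \<bullet> xi s) t'"
  proof (rule DERIV_nonneg_imp_nondecreasing[OF assms(3)])
    fix s assume s: "t \<le> s" "s \<le> t'"
    then have sI: "s \<in> I" using intv assms by blast
    have cd: "((\<lambda>s. c \<bullet> xi s) has_real_derivative (c \<bullet> v (xi s))) (at s)"
    proof -
      have "((\<lambda>s. c \<bullet> xi s) has_derivative (\<lambda>h. c \<bullet> (h *\<^sub>R v (xi s)))) (at s)"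
        using xid[OF sI] unfolding has_vector_derivative_def by (intro derivative_intros)
      then show ?thesis unfolding has_field_derivative_def
        by (rule has_derivative_eq_rhs) (simp add: fun_eq_iff mult.commute)
    qed
    have "((\<lambda>s. psi (xi s) / \<eta> - c \<bullet> xi s) has_real_derivative ((norm (v (xi s)))\<^sup>2 / \<eta> - c \<bullet> v (xi s))) (at s)"
      using eta0 by (auto intro!: derivative_eq_intros Phi_deriv[OF sI] cd)
    moreover have "c \<bullet> v (xi s) \<le> (norm (v (xi s)))\<^sup>2 / \<eta>"
    proof -
      have "c \<bullet> v (xi s) \<le> norm c * norm (v (xi s))" by (rule norm_cauchy_schwarz)
      also have "\<dots> = norm (v (xi s))" using nc by simp
      also have "\<dots> \<le> (norm (v (xi s)))\<^sup>2 / \<eta>"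
        using etab[OF xiS[OF sI]] eta0 by (simp add: pos_le_divide_eq power2_eq_square mult_left_mono)
      finally show ?thesis .
    qed
    ultimately show "\<exists>y. ((\<lambda>s. psi (xi s) / \<eta> - c \<bullet> xi s) has_real_derivative y) (at s) \<and> 0 \<le> y" by auto
  qed
  then have "c \<bullet> (xi t' - xi t) \<le> psi (xi t') / \<eta> - psi (xi t) / \<eta>" by (simp add: inner_diff_right)
  moreover have "c \<bullet> (xi t' - xi t) = norm (xi t' - xi t)"
    unfolding c_def using False by (simp add: power2_norm_eq_inner[symmetric] power2_eq_square)
  ultimately show ?thesis by (simp add: diff_divide_distrib)
qed

lemma norm_from_psi:
  assumes lim: "filterlim (\<lambda>t. psi (xi t)) at_top F" and ev: "eventually (\<lambda>t. t \<in> I) F"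
  shows "filterlim (\<lambda>t. norm (xi t)) at_top F"
  unfolding filterlim_at_top
proof
  fix Z :: real
  define Kc where "Kc = S \<inter> cball 0 \<bar>Z\<bar>"
  have cKc: "compact Kc" unfolding Kc_def using cS by (simp add: closed_Int_compact)
  have "continuous_on Kc psi" using psic unfolding Kc_def by (rule continuous_on_subset) auto
  then obtain Bz where Bz: "\<And>q. q \<in> Kc \<Longrightarrow> norm (psi q) \<le> Bz" using bound_on_compact[OF _ cKc] by blast
  have "eventually (\<lambda>t. Bz < psi (xi t)) F" using lim unfolding filterlim_at_top_dense by blast
  with ev show "eventually (\<lambda>t. Z \<le> norm (xi t)) F"
  proof eventually_elim
    case (elim t)
    show ?case
    proof (rule ccontr)
      assume "\<not> Z \<le> norm (xi t)"
      then have "xi t \<in> Kc" unfolding Kc_def using xiS[OF elim(1)] by auto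
      then have "psi (xi t) \<le> Bz" using Bz by fastforce
      then show False using elim(2) by linarith
    qed
  qed
qed

lemma unb_case:
  assumes "\<not> bdd_above I"
  shows "filterlim (\<lambda>t. psi (xi t)) at_top at_top" "eventually (\<lambda>t. t \<in> I) at_top"
proof -
  have tI: "t \<in> I" if t0: "t \<ge> 0" for t
  proof -
    obtain b where "b \<in> I" "b > t" using assms unfolding bdd_above_def by (meson not_le)
    then show ?thesis using intv[OF II(3), of b t] t0 by simp
  qed
  show "eventually (\<lambda>t. t \<in> I) at_top" unfolding eventually_at_top_linorder using tI by blast
  show "filterlim (\<lambda>t. psi (xi t)) at_top at_top"
    unfolding filterlim_at_top
  proof
    fix Z :: real
    have e2: "\<eta>\<^sup>2 > 0" using eta0 by simp
    show "eventually (\<lambda>t. Z \<le> psi (xi t)) at_top"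
      unfolding eventually_at_top_linorder
    proof (intro exI allI impI)
      fix t assume t: "t \<ge> max 0 ((Z - psi (xi 0)) / \<eta>\<^sup>2)"
      then have t0: "t \<ge> 0" by simp
      have "psi (xi 0) + \<eta>\<^sup>2 * (t - 0) \<le> psi (xi t)" using Phi_mono[OF II(3) tI[OF t0] t0] .
      moreover have "(Z - psi (xi 0)) \<le> \<eta>\<^sup>2 * t" using t e2 by (simp add: pos_divide_le_eq mult.commute)
      ultimately show "Z \<le> psi (xi t)" by simp
    qed
  qed
qed

lemma bd_I:
  assumes "bdd_above I"
  shows "Sup I \<notin> I" "0 < Sup I" "\<And>t. 0 \<le> t \<Longrightarrow> t < Sup I \<Longrightarrow> t \<in> I"
    "eventually (\<lambda>t. t \<in> I) (at_left (Sup I))"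
proof -
  have ne: "I \<noteq> {}" using II(3) by blast
  show nI: "Sup I \<notin> I"
  proof
    assume "Sup I \<in> I"
    then obtain e where e: "e > 0" "ball (Sup I) e \<subseteq> I" using II(2) open_contains_ball by blast
    then have "Sup I + e / 2 \<in> I" by (auto simp: dist_real_def)
    then have "Sup I + e / 2 \<le> Sup I" using cSup_upper assms by blast
    then show False using e by simp
  qed
  have "0 \<le> Sup I" using cSup_upper[OF II(3) assms] .
  moreover have "0 \<noteq> Sup I" using nI II(3) by metis
  ultimately show T0: "0 < Sup I" by simp
  show tI: "t \<in> I" if t0: "0 \<le> t" and tl: "t < Sup I" for t
  proof -
    obtain b where "b \<in> I" "t < b" using tl less_cSup_iff[OF ne assms] by blast
    then show ?thesis using intv[OF II(3), of b t] t0 by simp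
  qed
  show "eventually (\<lambda>t. t \<in> I) (at_left (Sup I))"
    using eventually_at_left_real[OF T0] by eventually_elim (use tI in auto)
qed

lemma lim_exists:
  assumes bdd: "bdd_above I" and L: "\<And>t. 0 \<le> t \<Longrightarrow> t < Sup I \<Longrightarrow> psi (xi t) \<le> L"
  shows "\<exists>pT\<in>S. (xi \<longlongrightarrow> pT) (at_left (Sup I))"
proof -
  define T where "T = Sup I"
  have T0: "0 < T" and tI: "\<And>t. 0 \<le> t \<Longrightarrow> t < T \<Longrightarrow> t \<in> I" using bd_I[OF bdd] unfolding T_def by auto
  define Ph where "Ph = (\<lambda>t. psi (xi t)) ` {0..<T}"
  have neP: "Ph \<noteq> {}" unfolding Ph_def using T0 by auto
  have bP: "bdd_above Ph" unfolding Ph_def bdd_above_def using L unfolding T_def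
    by (intro exI[of _ L]) auto
  define Ls where "Ls = Sup Ph"
  have Phle: "psi (xi t) \<le> Ls" if "0 \<le> t" "t < T" for t
    unfolding Ls_def using that by (intro cSup_upper bP) (auto simp: Ph_def)
  have Phge: "\<exists>t0. 0 \<le> t0 \<and> t0 < T \<and> Ls - e < psi (xi t0)" if "e > 0" for e
  proof -
    have "Ls - e < Sup Ph" using that unfolding Ls_def by simp
    then obtain z where "z \<in> Ph" "Ls - e < z" using less_cSup_iff[OF neP bP] by blast
    then show ?thesis unfolding Ph_def by auto
  qed
  have cauchy: "\<exists>t0. 0 \<le> t0 \<and> t0 < T \<and> (\<forall>t t'. t0 \<le> t \<longrightarrow> t < T \<longrightarrow> t0 \<le> t' \<longrightarrow> t' < T \<longrightarrow> norm (xi t - xi t') \<le> e)"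
    if e: "e > 0" for e
  proof -
    obtain t0 where t0: "0 \<le> t0" "t0 < T" "Ls - e * \<eta> < psi (xi t0)" using Phge[of "e * \<eta>"] e eta0 by auto
    have one: "norm (xi t' - xi t) \<le> e" if "t0 \<le> t" "t \<le> t'" "t' < T" for t t'
    proof -
      have tIs: "t \<in> I" "t' \<in> I" "t0 \<in> I" using tI that t0 by auto
      have "norm (xi t' - xi t) \<le> (psi (xi t') - psi (xi t)) / \<eta>" by (rule xi_lip[OF tIs(1,2) that(2)])
      also have "\<dots> \<le> (Ls - psi (xi t0)) / \<eta>"
      proof (rule divide_right_mono)
        have nn: "0 \<le> \<eta>\<^sup>2 * (t - t0)" using that(1) by simp
        show "psi (xi t') - psi (xi t) \<le> Ls - psi (xi t0)"
          using Phle[of t'] Phi_mono[OF tIs(3,1) that(1)] that t0 nn by linarith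
      qed (use eta0 in simp)
      also have "\<dots> \<le> e" using t0(3) eta0 by (simp add: pos_divide_le_eq)
      finally show ?thesis .
    qed
    show ?thesis
    proof (intro exI conjI allI impI)
      fix t t' assume "t0 \<le> t" "t < T" "t0 \<le> t'" "t' < T"
      then show "norm (xi t - xi t') \<le> e"
        using one[of t t'] one[of t' t] by (cases "t \<le> t'") (auto simp: norm_minus_commute)
    qed (use t0 in auto)
  qed
  define sn where "sn n = T - T * (1 / (real n + 1))" for n
  have sn_in: "0 \<le> sn n" "sn n < T" for n unfolding sn_def using T0 by (auto simp: field_simps)
  have sn_lim: "sn \<longlonglongrightarrow> T"
    unfolding sn_def using tendsto_diff[OF tendsto_const tendsto_mult[OF tendsto_const one_over_n_tendsto], of T T] by simp
  have "Cauchy (\<lambda>n. xi (sn n))"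
  proof (rule metric_CauchyI)
    fix e :: real assume e: "e > 0"
    obtain t0 where t0: "0 \<le> t0" "t0 < T" and c: "\<And>t t'. t0 \<le> t \<Longrightarrow> t < T \<Longrightarrow> t0 \<le> t' \<Longrightarrow> t' < T \<Longrightarrow> norm (xi t - xi t') \<le> e / 2"
      using cauchy[of "e / 2"] e by auto
    have "eventually (\<lambda>n. t0 < sn n) sequentially" using sn_lim t0(2) by (rule order_tendstoD)
    then obtain N where N: "\<And>n. n \<ge> N \<Longrightarrow> t0 < sn n" unfolding eventually_sequentially by blast
    show "\<exists>M. \<forall>m\<ge>M. \<forall>n\<ge>M. dist (xi (sn m)) (xi (sn n)) < e"
    proof (intro exI allI impI)
      fix m n assume "m \<ge> N" "n \<ge> N"
      then have "norm (xi (sn m) - xi (sn n)) \<le> e / 2" using c N sn_in by (meson less_imp_le)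
      then show "dist (xi (sn m)) (xi (sn n)) < e" using e by (simp add: dist_norm)
    qed
  qed
  then obtain pT where pT: "(\<lambda>n. xi (sn n)) \<longlonglongrightarrow> pT" using Cauchy_convergent_iff convergent_def by blast
  have pTS: "pT \<in> S" using closed_sequentially[OF cS _ pT] xiS tI sn_in by blast
  have "(xi \<longlongrightarrow> pT) (at_left T)"
    unfolding tendsto_iff
  proof (intro allI impI)
    fix e :: real assume e: "e > 0"
    obtain t0 where t0: "0 \<le> t0" "t0 < T" and c: "\<And>t t'. t0 \<le> t \<Longrightarrow> t < T \<Longrightarrow> t0 \<le> t' \<Longrightarrow> t' < T \<Longrightarrow> norm (xi t - xi t') \<le> e / 2"
      using cauchy[of "e / 2"] e by auto
    have "eventually (\<lambda>n. t0 < sn n) sequentially" using sn_lim t0(2) by (rule order_tendstoD)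
    moreover have "eventually (\<lambda>n. dist (xi (sn n)) pT < e / 2) sequentially"
    proof -
      have "e / 2 > 0" using e by simp
      then show ?thesis using pT unfolding tendsto_iff by blast
    qed
    ultimately have "eventually (\<lambda>n. t0 < sn n \<and> dist (xi (sn n)) pT < e / 2) sequentially"
      by (rule eventually_conj)
    then obtain n where n: "t0 < sn n" "dist (xi (sn n)) pT < e / 2"
      unfolding eventually_sequentially by blast
    have "eventually (\<lambda>t. t \<in> {t0<..<T}) (at_left T)" by (rule eventually_at_left_real[OF t0(2)])
    then show "eventually (\<lambda>t. dist (xi t) pT < e) (at_left T)"
    proof eventually_elim
      case (elim t)
      have "dist (xi t) pT \<le> dist (xi t) (xi (sn n)) + dist (xi (sn n)) pT" by (rule dist_triangle)
      also have "dist (xi t) (xi (sn n)) \<le> e / 2"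
        unfolding dist_norm using c[of t "sn n"] elim n sn_in by auto
      finally show ?case using n by linarith
    qed
  qed
  then show ?thesis using pTS unfolding T_def by blast
qed

lemma left_deriv:
  assumes bdd: "bdd_above I" and pT: "pT \<in> S" and lim: "(xi \<longlongrightarrow> pT) (at_left (Sup I))" and e: "e > 0"
  shows "\<exists>d>0. \<forall>t. Sup I - d < t \<and> t < Sup I \<longrightarrow> norm (pT - xi t - (Sup I - t) *\<^sub>R v pT) \<le> e * (Sup I - t)"
proof -
  define T where "T = Sup I"
  have T0: "0 < T" using bd_I[OF bdd] unfolding T_def by auto
  obtain \<rho> where \<rho>: "\<rho> > 0" "\<And>q. q \<in> S \<Longrightarrow> dist q pT < \<rho> \<Longrightarrow> dist (v q) (v pT) < e"
    using vc pT e unfolding continuous_on_iff by metis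
  have "eventually (\<lambda>t. dist (xi t) pT < \<rho>) (at_left T)" using lim \<rho>(1) unfolding tendsto_iff T_def by blast
  moreover have "eventually (\<lambda>t. t \<in> I) (at_left T)" using bd_I[OF bdd] unfolding T_def by blast
  ultimately have "eventually (\<lambda>t. t \<in> I \<and> dist (xi t) pT < \<rho>) (at_left T)" by (simp add: eventually_conj_iff)
  then obtain b where b: "b < T" "\<And>t. b < t \<Longrightarrow> t < T \<Longrightarrow> t \<in> I \<and> dist (xi t) pT < \<rho>"
    unfolding eventually_at_left_field by blast
  show ?thesis unfolding T_def[symmetric]
  proof (intro exI conjI allI impI)
    show "T - b > 0" using b by simp
    fix t assume t: "T - (T - b) < t \<and> t < T"
    have key: "norm (xi t' - xi t - (t' - t) *\<^sub>R v pT) \<le> e * (t' - t)" if t': "t < t'" "t' < T" for t'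
    proof -
      have der: "((\<lambda>\<tau>. xi \<tau> - \<tau> *\<^sub>R v pT) has_derivative (\<lambda>h. h *\<^sub>R (v (xi \<tau>) - v pT))) (at \<tau> within {t..t'})"
        if "\<tau> \<in> {t..t'}" for \<tau>
      proof -
        have "\<tau> \<in> I" using b(2)[of \<tau>] that t t' by auto
        then have "(xi has_derivative (\<lambda>h. h *\<^sub>R v (xi \<tau>))) (at \<tau>)" using xid unfolding has_vector_derivative_def by blast
        then have "((\<lambda>\<tau>. xi \<tau> - \<tau> *\<^sub>R v pT) has_derivative (\<lambda>h. h *\<^sub>R v (xi \<tau>) - h *\<^sub>R v pT)) (at \<tau>)"
          by (auto intro!: derivative_eq_intros)
        then show ?thesis by (auto intro: has_derivative_at_withinI simp: scaleR_diff_right)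
      qed
      have onb: "onorm (\<lambda>h. h *\<^sub>R (v (xi \<tau>) - v pT)) \<le> e" if "\<tau> \<in> {t..t'}" for \<tau>
      proof (rule onorm_le)
        fix h :: real
        have "\<tau> \<in> I" "dist (xi \<tau>) pT < \<rho>" using b(2)[of \<tau>] that t t' by auto
        then have "norm (v (xi \<tau>) - v pT) < e" using \<rho>(2) xiS by (simp add: dist_norm)
        then have "\<bar>h\<bar> * norm (v (xi \<tau>) - v pT) \<le> \<bar>h\<bar> * e" by (simp add: mult_left_mono)
        then show "norm (h *\<^sub>R (v (xi \<tau>) - v pT)) \<le> e * norm h"
          by (simp add: mult.commute)
      qed
      have "norm ((xi t' - t' *\<^sub>R v pT) - (xi t - t *\<^sub>R v pT)) \<le> e * norm (t' - t)"
        by (rule differentiable_bound[OF convex_real_interval(5) der onb]) (use t' in auto)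
      then show ?thesis using t' by (simp add: algebra_simps)
    qed
    have L1: "((\<lambda>t'. norm (xi t' - xi t - (t' - t) *\<^sub>R v pT)) \<longlongrightarrow> norm (pT - xi t - (T - t) *\<^sub>R v pT)) (at_left T)"
      using lim unfolding T_def[symmetric] by (intro tendsto_intros)
    have L2: "((\<lambda>t'. e * (t' - t)) \<longlongrightarrow> e * (T - t)) (at_left T)"
      by (intro tendsto_intros)
    have "eventually (\<lambda>t'. t' \<in> {t<..<T}) (at_left T)" using eventually_at_left_real t by blast
    then have "eventually (\<lambda>t'. norm (xi t' - xi t - (t' - t) *\<^sub>R v pT) \<le> e * (t' - t)) (at_left T)"
      by eventually_elim (use key in auto)
    from tendsto_le[OF trivial_limit_at_left_real L2 L1 this]
    show "norm (pT - xi t - (T - t) *\<^sub>R v pT) \<le> e * (T - t)" .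
  qed
qed

lemma I_lt: "bdd_above I \<Longrightarrow> t \<in> I \<Longrightarrow> t < Sup I"
  using cSup_upper[of t I] bd_I(1)[of] by (metis order.not_eq_order_implies_strict)

lemma no_bounded:
  assumes bdd: "bdd_above I" and L: "\<And>t. 0 \<le> t \<Longrightarrow> t < Sup I \<Longrightarrow> psi (xi t) \<le> L"
  shows False
proof -
  define T where "T = Sup I"
  have TnI: "T \<notin> I" and T0: "0 < T" and tI: "\<And>t. 0 \<le> t \<Longrightarrow> t < T \<Longrightarrow> t \<in> I"
    using bd_I[OF bdd] unfolding T_def by auto
  have Ilt: "\<And>t. t \<in> I \<Longrightarrow> t < T" using I_lt[OF bdd] unfolding T_def by blast
  obtain pT where pTS: "pT \<in> S" and lim: "(xi \<longlongrightarrow> pT) (at_left T)"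
    using lim_exists[OF bdd L] unfolding T_def by blast
  obtain a y where a: "a > 0" and y0: "y 0 = pT"
    and yS: "\<And>t. t \<in> {0..a} \<Longrightarrow> y t \<in> S"
    and yd: "\<And>t. t \<in> {0..a} \<Longrightarrow> (y has_vector_derivative v (y t)) (at t within {0..a})"
    using LE[OF pTS] by blast
  define \<zeta> where "\<zeta> t = (if t < T then xi t else y (t - T))" for t
  define J where "J = I \<union> {0<..<T + a}"
  have oJ: "open J" unfolding J_def using II(2) by auto
  have iJ: "is_interval J"
    unfolding is_interval_1
  proof (intro ballI allI impI)
    fix p q r assume p: "p \<in> J" and q: "q \<in> J" and r: "p \<le> r \<and> r \<le> q"
    show "r \<in> J"
    proof (cases "r < T")
      case True
      show ?thesis
      proof (cases "r > 0")
        case True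
        then show ?thesis using tI \<open>r < T\<close> unfolding J_def by auto
      next
        case False
        then have "p \<in> I" using p r unfolding J_def by auto
        then have "r \<in> I" using intv[OF _ II(3), of p r] r False by auto
        then show ?thesis unfolding J_def by auto
      qed
    next
      case False
      have "q \<notin> I" using Ilt[of q] False r by auto
      then have "q < T + a" using q unfolding J_def by auto
      then show ?thesis using False r T0 unfolding J_def by auto
    qed
  qed
  have J0: "0 \<in> J" unfolding J_def using II(3) by auto
  have z0: "\<zeta> 0 = x" unfolding \<zeta>_def using T0 II(4) by simp
  have zS: "\<zeta> t \<in> S" if "t \<in> J" for t
  proof (cases "t < T")
    case True
    then have "t \<in> I" using that tI unfolding J_def by auto
    then show ?thesis using True xiS unfolding \<zeta>_def by simp
  next
    case False
    then have "t - T \<in> {0..a}" using that Ilt unfolding J_def by force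
    then show ?thesis using False yS unfolding \<zeta>_def by simp
  qed
  have zd: "(\<zeta> has_vector_derivative v (\<zeta> t)) (at t)" if tJ: "t \<in> J" for t
  proof -
    consider "t < T" | "t > T" | "t = T" by linarith
    then show ?thesis
    proof cases
      case 1
      then have tI': "t \<in> I" using tJ tI unfolding J_def by auto
      have "(\<zeta> has_vector_derivative v (xi t)) (at t)"
        by (rule has_vector_derivative_transform_within_open[OF xid[OF tI'], of "I \<inter> {..<T}"])
           (use II(2) tI' 1 in \<open>auto simp: \<zeta>_def\<close>)
      then show ?thesis using 1 unfolding \<zeta>_def by simp
    next
      case 2
      then have s: "t - T \<in> {0<..<a}" using tJ Ilt unfolding J_def by force
      have "(y has_vector_derivative v (y (t - T))) (at (t - T) within {0<..<a})"
        by (rule has_vector_derivative_within_subset[OF yd]) (use s in auto)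
      then have yat: "(y has_vector_derivative v (y (t - T))) (at (t - T))"
        using at_within_open[OF s] by simp
      have sh: "((\<lambda>t. t - T) has_derivative (\<lambda>h. h)) (at t)" by (auto intro!: derivative_eq_intros)
      have "((\<lambda>t. y (t - T)) has_vector_derivative v (y (t - T))) (at t)"
        using has_derivative_compose[OF sh yat[unfolded has_vector_derivative_def]]
        unfolding has_vector_derivative_def by simp
      then have "(\<zeta> has_vector_derivative v (y (t - T))) (at t)"
        by (rule has_vector_derivative_transform_within_open[of _ _ _ "{T<..<T + a}"])
           (use 2 s in \<open>auto simp: \<zeta>_def\<close>)
      then show ?thesis using 2 unfolding \<zeta>_def by simp
    next
      case 3
      have zT: "\<zeta> T = pT" unfolding \<zeta>_def using y0 by simp
      have "(\<zeta> has_derivative (\<lambda>h. h *\<^sub>R v pT)) (at T within UNIV)"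
        unfolding has_derivative_within_alt
      proof (intro conjI allI impI bounded_linear_scaleR_left)
        fix e :: real assume e: "e > 0"
        obtain dL where dL: "dL > 0" "\<And>t. T - dL < t \<and> t < T \<Longrightarrow> norm (pT - xi t - (T - t) *\<^sub>R v pT) \<le> e * (T - t)"
          using left_deriv[OF bdd pTS lim[unfolded T_def] e] unfolding T_def by blast
        have "(y has_derivative (\<lambda>h. h *\<^sub>R v (y 0))) (at 0 within {0..a})"
          using yd[of 0] a unfolding has_vector_derivative_def by simp
        then obtain dR where dR: "dR > 0" "\<And>s. s \<in> {0..a} \<Longrightarrow> norm (s - 0) < dR \<Longrightarrow>
            norm (y s - y 0 - (s - 0) *\<^sub>R v (y 0)) \<le> e * norm (s - 0)"
          unfolding has_derivative_within_alt using e by metis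
        show "\<exists>d>0. \<forall>t\<in>UNIV. norm (t - T) < d \<longrightarrow> norm (\<zeta> t - \<zeta> T - (t - T) *\<^sub>R v pT) \<le> e * norm (t - T)"
        proof (intro exI conjI ballI impI)
          show "min dL (min dR a) > 0" using dL dR a by simp
          fix t assume t: "norm (t - T) < min dL (min dR a)"
          show "norm (\<zeta> t - \<zeta> T - (t - T) *\<^sub>R v pT) \<le> e * norm (t - T)"
          proof (cases "t < T")
            case True
            have "norm (pT - xi t - (T - t) *\<^sub>R v pT) \<le> e * (T - t)" using dL(2)[of t] t True by auto
            moreover have "\<zeta> t - \<zeta> T - (t - T) *\<^sub>R v pT = - (pT - xi t - (T - t) *\<^sub>R v pT)"
              unfolding zT using True by (simp add: \<zeta>_def algebra_simps)
            ultimately show ?thesis using True by (simp only: norm_minus_cancel) simp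
          next
            case False
            then have s: "t - T \<in> {0..a}" "norm (t - T - 0) < dR" using t by auto
            have "\<zeta> t = y (t - T)" using False unfolding \<zeta>_def by simp
            then show ?thesis using dR(2)[OF s] zT y0 by simp
          qed
        qed
      qed
      then show ?thesis using 3 zT unfolding has_vector_derivative_def by simp
    qed
  qed
  have "flow_sol v S x J \<zeta>" unfolding flow_sol_def using iJ oJ J0 z0 zS zd by blast
  moreover have "I \<subseteq> J" unfolding J_def by auto
  moreover have "\<forall>t\<in>I. \<zeta> t = xi t" using Ilt unfolding \<zeta>_def by auto
  ultimately have "J = I" using mf unfolding max_flow_sol_def by blast
  moreover have "T \<in> J" unfolding J_def using T0 a by auto
  ultimately show False using TnI by blast
qed

lemma bd_case:
  assumes bdd: "bdd_above I"
  shows "filterlim (\<lambda>t. psi (xi t)) at_top (at_left (Sup I))"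
proof (cases "\<forall>Z. \<exists>t. 0 \<le> t \<and> t < Sup I \<and> Z \<le> psi (xi t)")
  case True
  show ?thesis unfolding filterlim_at_top
  proof
    fix Z
    obtain t0 where t0: "0 \<le> t0" "t0 < Sup I" "Z \<le> psi (xi t0)" using True by blast
    have t0I: "t0 \<in> I" using bd_I(3)[OF bdd t0(1,2)] .
    show "eventually (\<lambda>t. Z \<le> psi (xi t)) (at_left (Sup I))"
      unfolding eventually_at_left_field
    proof (intro exI conjI allI impI)
      show "t0 < Sup I" by fact
      fix t assume t: "t0 < t" "t < Sup I"
      then have tI: "t \<in> I" using bd_I(3)[OF bdd, of t] t0 by auto
      have "psi (xi t0) + \<eta>\<^sup>2 * (t - t0) \<le> psi (xi t)" using Phi_mono[OF t0I tI] t by simp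
      moreover have "0 \<le> \<eta>\<^sup>2 * (t - t0)" using t by simp
      ultimately show "Z \<le> psi (xi t)" using t0(3) by linarith
    qed
  qed
next
  case False
  then obtain Z where "\<And>t. 0 \<le> t \<Longrightarrow> t < Sup I \<Longrightarrow> psi (xi t) \<le> Z" by (meson not_le less_imp_le)
  then show ?thesis using no_bounded[OF bdd] by blast
qed

lemma upper_main:
  "filterlim (\<lambda>t. norm (xi t)) at_top (upper_end I) \<and> filterlim (\<lambda>t. psi (xi t)) at_top (upper_end I)"
proof (cases "bdd_above I")
  case True
  have "upper_end I = at_left (Sup I)" unfolding upper_end_def using True by simp
  then show ?thesis using bd_case[OF True] norm_from_psi[OF bd_case[OF True] bd_I(4)[OF True]] by simp
next
  case False
  have "upper_end I = at_top" unfolding upper_end_def using False by simp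
  then show ?thesis using unb_case[OF False] norm_from_psi[OF unb_case[OF False]] by simp
qed

end

lemma flow_reflect:
  assumes fs: "flow_sol v S x I xi"
  shows "flow_sol (\<lambda>p. - v p) S x (uminus ` I) (\<lambda>t. xi (- t))"
proof -
  have ii: "is_interval I" "open I" "0 \<in> I" "xi 0 = x"
    and pt: "\<And>t. t \<in> I \<Longrightarrow> xi t \<in> S \<and> (xi has_vector_derivative v (xi t)) (at t)"
    using fs unfolding flow_sol_def by auto
  have "is_interval (uminus ` I)"
    unfolding is_interval_1
  proof (intro ballI allI impI)
    fix a b r :: real assume a: "a \<in> uminus ` I" and b: "b \<in> uminus ` I" and r: "a \<le> r \<and> r \<le> b"
    have "- a \<in> I" "- b \<in> I" using a b by auto
    then have "- r \<in> I" using ii(1) r unfolding is_interval_1 by (meson neg_le_iff_le)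
    then show "r \<in> uminus ` I" by (metis image_eqI minus_minus)
  qed
  moreover have "open (uminus ` I)" using open_negations[OF ii(2)] by simp
  moreover have "0 \<in> uminus ` I" using ii(3) by (metis image_eqI minus_zero)
  moreover have "xi (- 0) = x" using ii(4) by simp
  moreover have "xi (- t) \<in> S \<and> ((\<lambda>t. xi (- t)) has_vector_derivative - v (xi (- t))) (at t)"
    if "t \<in> uminus ` I" for t
  proof -
    have tI: "- t \<in> I" using that by auto
    have d: "(xi has_derivative (\<lambda>h. h *\<^sub>R v (xi (- t)))) (at (- t))"
      using pt[OF tI] unfolding has_vector_derivative_def by blast
    have m: "((\<lambda>t. - t) has_derivative (\<lambda>h. - h)) (at t)" by (auto intro!: derivative_eq_intros)
    have "((\<lambda>t. xi (- t)) has_derivative (\<lambda>h. (- h) *\<^sub>R v (xi (- t)))) (at t)"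
      using has_derivative_compose[OF m d] by simp
    then have "((\<lambda>t. xi (- t)) has_vector_derivative - v (xi (- t))) (at t)"
      unfolding has_vector_derivative_def by (rule has_derivative_eq_rhs) (simp add: fun_eq_iff)
    then show ?thesis using pt[OF tI] by simp
  qed
  ultimately show ?thesis unfolding flow_sol_def by simp
qed

lemma max_reflect:
  assumes mf: "max_flow_sol v S x I xi"
  shows "max_flow_sol (\<lambda>p. - v p) S x (uminus ` I) (\<lambda>t. xi (- t))"
  unfolding max_flow_sol_def
proof (intro conjI allI impI)
  show "flow_sol (\<lambda>p. - v p) S x (uminus ` I) (\<lambda>t. xi (- t))"
    using mf unfolding max_flow_sol_def by (blast intro: flow_reflect)
  fix J \<zeta> assume h: "flow_sol (\<lambda>p. - v p) S x J \<zeta> \<and> uminus ` I \<subseteq> J \<and> (\<forall>t\<in>uminus ` I. \<zeta> t = xi (- t))"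
  have "flow_sol (\<lambda>p. - (- v p)) S x (uminus ` J) (\<lambda>t. \<zeta> (- t))" using h flow_reflect by blast
  then have f2: "flow_sol v S x (uminus ` J) (\<lambda>t. \<zeta> (- t))" by simp
  have s2: "I \<subseteq> uminus ` J" using h by (auto simp: image_iff) (metis minus_minus image_subset_iff imageI)
  have a2: "\<forall>t\<in>I. \<zeta> (- t) = xi t" using h by auto
  have "uminus ` J = I" using mf f2 s2 a2 unfolding max_flow_sol_def by blast
  then have "uminus ` uminus ` J = uminus ` I" by simp
  then show "J = uminus ` I" by (simp add: image_image)
qed

lemma lower_upper: "lower_end I = filtermap uminus (upper_end (uminus ` I))"
proof (cases "bdd_below I")
  case True
  have b: "bdd_above (uminus ` I)" using bdd_above_uminus_image[of "\<lambda>x. x" I] True by simp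
  have "Inf I = - Sup (uminus ` I)" by (simp add: Inf_real_def)
  moreover have "at_right (- Sup (uminus ` I)) = filtermap uminus (at_left (Sup (uminus ` I)))"
    using at_right_minus[of "- Sup (uminus ` I)"] by simp
  ultimately show ?thesis unfolding lower_end_def upper_end_def using True b by simp
next
  case False
  have b: "\<not> bdd_above (uminus ` I)" using bdd_above_uminus_image[of "\<lambda>x. x" I] False by simp
  show ?thesis unfolding lower_end_def upper_end_def using False b by (simp add: at_bot_mirror)
qed

theorem lemma2p1:
  fixes w :: "'a::euclidean_space set"
    and nrm :: "'a \<Rightarrow> 'a"
    and psi :: "real \<times> 'a \<Rightarrow> real"
    and v :: "real \<times> 'a \<Rightarrow> real \<times> 'a"
    and v' :: "real \<times> 'a \<Rightarrow> (real \<times> 'a) \<Rightarrow>\<^sub>L (real \<times> 'a)"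
  assumes "bounded w" and "connected w" and "open w"
    and "C1_boundary_normal w nrm"
    and "\<forall>p\<in>UNIV \<times> w. (psi has_derivative (\<lambda>h. v p \<bullet> h)) (at p)"
    and "\<forall>p\<in>closure (UNIV \<times> w). (psi has_derivative (\<lambda>h. v p \<bullet> h)) (at p within closure (UNIV \<times> w))"
    and "continuous_on (closure (UNIV \<times> w)) psi"
    and "\<forall>p\<in>UNIV \<times> w. (v has_derivative blinfun_apply (v' p)) (at p)"
    and "continuous_on (UNIV \<times> w) v'"
    and "continuous_on (closure (UNIV \<times> w)) v"
    and "\<forall>p\<in>frontier (UNIV \<times> w). v p \<bullet> (0, nrm (snd p)) = 0"
    and "(INF p\<in>closure (UNIV \<times> w). norm (v p)) > 0"
    and "x \<in> closure (UNIV \<times> w)"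
    and "max_flow_sol v (closure (UNIV \<times> w)) x I xi"
  shows "filterlim (\<lambda>t. norm (xi t)) at_top (lower_end I)
     \<and> filterlim (\<lambda>t. norm (xi t)) at_top (upper_end I)
     \<and> filterlim (\<lambda>t. psi (xi t)) at_bot (lower_end I)
     \<and> filterlim (\<lambda>t. psi (xi t)) at_top (upper_end I)"
proof -
  note ow = assms(3) and C1 = assms(4) and psid0 = assms(6) and psic = assms(7)
    and vc = assms(10) and tang = assms(11) and infp = assms(12) and mf = assms(14)
  define S where "S = closure ((UNIV :: real set) \<times> w)"
  define \<eta> where "\<eta> = (INF p\<in>S. norm (v p))"
  have cS: "closed S" unfolding S_def by simp
  have eta0: "\<eta> > 0" using infp unfolding \<eta>_def S_def .
  have etab: "\<And>p. p \<in> S \<Longrightarrow> \<eta> \<le> norm (v p)"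
    unfolding \<eta>_def by (rule cINF_lower) (auto intro: bdd_belowI[of _ 0])
  have psid: "\<And>p. p \<in> S \<Longrightarrow> (psi has_derivative (\<lambda>h. v p \<bullet> h)) (at p within S)"
    using psid0 unfolding S_def by blast
  have psic': "continuous_on S psi" using psic unfolding S_def .
  have vc': "continuous_on S v" using vc unfolding S_def .
  have LE: "\<And>p. p \<in> S \<Longrightarrow> \<exists>a>0. \<exists>y. y 0 = p \<and> (\<forall>t\<in>{0..a}. y t \<in> S \<and>
                (y has_vector_derivative v (y t)) (at t within {0..a}))"
    unfolding S_def by (rule local_exist[OF ow C1 vc tang])
  have mf': "max_flow_sol v S x I xi" using mf unfolding S_def .
  have up: "filterlim (\<lambda>t. norm (xi t)) at_top (upper_end I) \<and> filterlim (\<lambda>t. psi (xi t)) at_top (upper_end I)"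
    by (rule upper_main[OF cS psid psic' vc' eta0 etab LE mf'])
  have psidm: "\<And>p. p \<in> S \<Longrightarrow> ((\<lambda>p. - psi p) has_derivative (\<lambda>h. (- v p) \<bullet> h)) (at p within S)"
  proof -
    fix p assume "p \<in> S"
    from has_derivative_minus[OF psid[OF this]]
    show "((\<lambda>p. - psi p) has_derivative (\<lambda>h. (- v p) \<bullet> h)) (at p within S)" by simp
  qed
  have psicm: "continuous_on S (\<lambda>p. - psi p)" using psic' by (rule continuous_on_minus)
  have vcm: "continuous_on S (\<lambda>p. - v p)" using vc' by (rule continuous_on_minus)
  have etabm: "\<And>p. p \<in> S \<Longrightarrow> \<eta> \<le> norm (- v p)" using etab by simp
  have vcm0: "continuous_on (closure (UNIV \<times> w)) (\<lambda>p. - v p)" using vcm unfolding S_def .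
  have tangm: "\<forall>p\<in>frontier (UNIV \<times> w). (- v p) \<bullet> (0, nrm (snd p)) = 0" using tang by simp
  have LEm: "\<And>p. p \<in> S \<Longrightarrow> \<exists>a>0. \<exists>y. y 0 = p \<and> (\<forall>t\<in>{0..a}. y t \<in> S \<and>
                (y has_vector_derivative - v (y t)) (at t within {0..a}))"
    unfolding S_def by (rule local_exist[OF ow C1 vcm0 tangm])
  have mfm: "max_flow_sol (\<lambda>p. - v p) S x (uminus ` I) (\<lambda>t. xi (- t))" by (rule max_reflect[OF mf'])
  have lo: "filterlim (\<lambda>t. norm (xi (- t))) at_top (upper_end (uminus ` I)) \<and>
            filterlim (\<lambda>t. - psi (xi (- t))) at_top (upper_end (uminus ` I))"
    by (rule upper_main[OF cS psidm psicm vcm eta0 etabm LEm mfm])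
  have lo1: "filterlim (\<lambda>t. norm (xi t)) at_top (lower_end I)"
    unfolding lower_upper filterlim_filtermap using lo by simp
  have lo2: "filterlim (\<lambda>t. psi (xi t)) at_bot (lower_end I)"
    unfolding lower_upper filterlim_filtermap filterlim_uminus_at_bot using lo by simp
  show ?thesis using up lo1 lo2 by blast
qed

end
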